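(* For $n\geq 1$ and $m\geq 2$, the flip graph $\mathcal{T}(T(2n+1,2m))$ of domino tilings of the quadriculated torus $T(2n+1,2m)$ has exactly two components, and these two components are isomorphic.
   Context: The quadriculated torus $T(a,b)$ is obtained from an $a\times b$ chessboard ($a$ rows each of $b$ unit squares) by identifying left and right sides and top and bottom sides. A domino is the union of two adjacent unit squares; a tiling is a collection of dominoes with disjoint interiors covering the surface. A flip replaces two parallel dominoes forming a $2\times 2$ block by the other two dominoes covering that block. The flip graph has the tilings as vertices, two tilings being adjacent iff they differ by a single flip. *)

theory Defs
  imports Main
begin

text \<open>Quadriculated torus T(a,b): a rows, b columns; cell (i,j) with i < a (row), j < b (column),
  indices taken modulo a resp. b.\<close>

type_synonym cell = "nat \<times> nat"

definition cells :: "nat \<Rightarrow> nat \<Rightarrow> cell set" where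
  "cells a b = {(i, j). i < a \<and> j < b}"

definition down :: "nat \<Rightarrow> cell \<Rightarrow> cell" where
  "down a c = ((fst c + 1) mod a, snd c)"

definition right :: "nat \<Rightarrow> cell \<Rightarrow> cell" where
  "right b c = (fst c, (snd c + 1) mod b)"

definition is_domino :: "nat \<Rightarrow> nat \<Rightarrow> cell set \<Rightarrow> bool" where
  "is_domino a b D \<longleftrightarrow> (\<exists>c \<in> cells a b. D = {c, down a c} \<or> D = {c, right b c})"

definition is_tiling :: "nat \<Rightarrow> nat \<Rightarrow> cell set set \<Rightarrow> bool" where
  "is_tiling a b T \<longleftrightarrow>
     (\<forall>D \<in> T. is_domino a b D) \<and>
     (\<forall>D \<in> T. \<forall>D' \<in> T. D \<noteq> D' \<longrightarrow> D \<inter> D' = {}) \<and>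
     \<Union>T = cells a b"

definition tilings :: "nat \<Rightarrow> nat \<Rightarrow> cell set set set" where
  "tilings a b = {T. is_tiling a b T}"

definition hpair :: "nat \<Rightarrow> nat \<Rightarrow> cell \<Rightarrow> cell set set" where
  "hpair a b c = {{c, right b c}, {down a c, right b (down a c)}}"

definition vpair :: "nat \<Rightarrow> nat \<Rightarrow> cell \<Rightarrow> cell set set" where
  "vpair a b c = {{c, down a c}, {right b c, down a (right b c)}}"

definition flip :: "nat \<Rightarrow> nat \<Rightarrow> cell set set \<Rightarrow> cell set set \<Rightarrow> bool" where
  "flip a b T T' \<longleftrightarrow> (\<exists>c \<in> cells a b.
      (hpair a b c \<subseteq> T \<and> T' = (T - hpair a b c) \<union> vpair a b c) \<or>
      (vpair a b c \<subseteq> T \<and> T' = (T - vpair a b c) \<union> hpair a b c))"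

definition flip_connected :: "nat \<Rightarrow> nat \<Rightarrow> (cell set set \<times> cell set set) set" where
  "flip_connected a b = {(T, T'). T \<in> tilings a b \<and> T' \<in> tilings a b \<and>
      (\<lambda>x y. x \<in> tilings a b \<and> y \<in> tilings a b \<and> flip a b x y)\<^sup>*\<^sup>* T T'}"

definition flip_components :: "nat \<Rightarrow> nat \<Rightarrow> cell set set set set" where
  "flip_components a b = tilings a b // flip_connected a b"

definition flip_iso :: "nat \<Rightarrow> nat \<Rightarrow> cell set set set \<Rightarrow> cell set set set \<Rightarrow> bool" where
  "flip_iso a b C1 C2 \<longleftrightarrow> (\<exists>f. bij_betw f C1 C2 \<and>
      (\<forall>x \<in> C1. \<forall>y \<in> C1. flip a b x y \<longleftrightarrow> flip a b (f x) (f y)))"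

end

theory Submission
  imports Defs
begin


lemma tiling_dom: "is_tiling a b T \<Longrightarrow> X \<in> T \<Longrightarrow> is_domino a b X"
  unfolding is_tiling_def by blast
lemma tiling_disj: "is_tiling a b T \<Longrightarrow> X \<in> T \<Longrightarrow> Y \<in> T \<Longrightarrow> X \<noteq> Y \<Longrightarrow> X \<inter> Y = {}"
  unfolding is_tiling_def by blast
lemma tiling_union: "is_tiling a b T \<Longrightarrow> \<Union>T = cells a b"
  unfolding is_tiling_def by blast

definition sg :: "int \<Rightarrow> int \<Rightarrow> int" where
  "sg i j = (if even (i + j) then 1 else -1)"

locale tor =
  fixes N L :: nat
  assumes oddN: "odd N" and N3: "3 \<le> N" and evL: "even L" and L4: "4 \<le> L"
begin

definition cl :: "int \<Rightarrow> int \<Rightarrow> cell" where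
  "cl i j = (nat (i mod int N), nat (j mod int L))"

lemma Npos: "int N > 0" and Lpos: "int L > 0" using N3 L4 by auto

lemma cl_eq: "cl a b = cl c d \<longleftrightarrow> (int N dvd (a - c) \<and> int L dvd (b - d))"
proof -
  have "nat (a mod int N) = nat (c mod int N) \<longleftrightarrow> a mod int N = c mod int N"
    using Npos by (simp add: nat_eq_iff)
  moreover have "nat (b mod int L) = nat (d mod int L) \<longleftrightarrow> b mod int L = d mod int L"
    using Lpos by (simp add: nat_eq_iff)
  ultimately show ?thesis unfolding cl_def by (simp add: mod_eq_dvd_iff)
qed

lemma smallN: "int N dvd x \<Longrightarrow> -2 \<le> x \<Longrightarrow> x \<le> 2 \<Longrightarrow> x = 0"
proof (rule ccontr)
  assume "int N dvd x" "-2 \<le> x" "x \<le> 2" "x \<noteq> 0"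
  then have "\<bar>int N\<bar> \<le> \<bar>x\<bar>" using dvd_imp_le_int by blast
  then show False using N3 \<open>-2 \<le> x\<close> \<open>x \<le> 2\<close> by auto
qed

lemma smallL: "int L dvd x \<Longrightarrow> -3 \<le> x \<Longrightarrow> x \<le> 3 \<Longrightarrow> x = 0"
proof (rule ccontr)
  assume "int L dvd x" "-3 \<le> x" "x \<le> 3" "x \<noteq> 0"
  then have "\<bar>int L\<bar> \<le> \<bar>x\<bar>" using dvd_imp_le_int by blast
  then show False using L4 \<open>-3 \<le> x\<close> \<open>x \<le> 3\<close> by auto
qed

lemma cl_shift: "cl a b = cl c d \<Longrightarrow> cl (a + k) (b + l) = cl (c + k) (d + l)"
  by (simp add: cl_eq)

lemma cl_perN: "cl (a + int N * k) b = cl a b"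
  by (simp add: cl_eq)
lemma cl_perL: "cl a (b + int L * k) = cl a b"
  by (simp add: cl_eq)
lemma cl_N: "cl (a + int N) b = cl a b"
  by (simp add: cl_eq)
lemma cl_L: "cl a (b + int L) = cl a b"
  by (simp add: cl_eq)

lemma cl_cells: "cl i j \<in> cells N L"
  unfolding cl_def cells_def using Npos Lpos by (auto simp: nat_less_iff)

lemma cells_cl: "x \<in> cells N L \<Longrightarrow> x = cl (int (fst x)) (int (snd x))"
  unfolding cl_def cells_def by (auto simp: zmod_int[symmetric])

lemma down_cl: "down N (cl i j) = cl (i + 1) j"
proof -
  have "int ((nat (i mod int N) + 1) mod N) = (i + 1) mod int N"
    using Npos by (simp add: zmod_int) (metis add.commute mod_add_left_eq)
  then show ?thesis unfolding down_def cl_def by (simp add: nat_eq_iff)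
qed

lemma right_cl: "right L (cl i j) = cl i (j + 1)"
proof -
  have "int ((nat (j mod int L) + 1) mod L) = (j + 1) mod int L"
    using Lpos by (simp add: zmod_int) (metis add.commute mod_add_left_eq)
  then show ?thesis unfolding right_def cl_def by (simp add: nat_eq_iff)
qed

definition vx :: "cell set set \<Rightarrow> int \<Rightarrow> int \<Rightarrow> int" where
  "vx T i j = (if {cl i j, cl (i + 1) j} \<in> T then 1 else 0)"
definition hx :: "cell set set \<Rightarrow> int \<Rightarrow> int \<Rightarrow> int" where
  "hx T i j = (if {cl i j, cl i (j + 1)} \<in> T then 1 else 0)"

lemma vx_N: "vx T (i + int N) j = vx T i j"
  unfolding vx_def using cl_N[of i j] cl_N[of "i+1" j] by (simp add: algebra_simps)
lemma hx_N: "hx T (i + int N) j = hx T i j"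
  unfolding hx_def using cl_N[of i j] cl_N[of i "j+1"] by (simp add: algebra_simps)
lemma vx_L: "vx T i (j + int L) = vx T i j"
  unfolding vx_def using cl_L[of i j] cl_L[of "i+1" j] by (simp add: algebra_simps)
lemma hx_L: "hx T i (j + int L) = hx T i j"
  unfolding hx_def using cl_L[of i j] cl_L[of i "j+1"] by (simp add: algebra_simps)

lemma domino_cases:
  assumes "is_domino N L X"
  obtains p q where "X = {cl p q, cl (p + 1) q}" | p q where "X = {cl p q, cl p (q + 1)}"
proof -
  from assms obtain x where x: "x \<in> cells N L" "X = {x, down N x} \<or> X = {x, right L x}"
    unfolding is_domino_def by blast
  from x(1) have "x = cl (int (fst x)) (int (snd x))" by (rule cells_cl)
  then show ?thesis using x that down_cl right_cl by metis
qed

lemma is_domino_v: "is_domino N L {cl p q, cl (p + 1) q}"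
  unfolding is_domino_def using cl_cells down_cl by metis
lemma is_domino_h: "is_domino N L {cl p q, cl p (q + 1)}"
  unfolding is_domino_def using cl_cells right_cl by metis

lemma cl_neq_r: "a \<noteq> c \<Longrightarrow> -2 \<le> a - c \<Longrightarrow> a - c \<le> 2 \<Longrightarrow> cl a b \<noteq> cl c d"
  using smallN[of "a - c"] by (auto simp: cl_eq)
lemma cl_neq_c: "b \<noteq> d \<Longrightarrow> -3 \<le> b - d \<Longrightarrow> b - d \<le> 3 \<Longrightarrow> cl a b \<noteq> cl c d"
  using smallL[of "b - d"] by (auto simp: cl_eq)

lemma two_eq: "{a, b} = {c, d} \<longleftrightarrow> (a = c \<and> b = d) \<or> (a = d \<and> b = c)"
  by (auto simp: doubleton_eq_iff)

lemma K1:
  assumes T: "is_tiling N L T"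
  shows "vx T (i - 1) j + vx T i j + hx T i (j - 1) + hx T i j = 1"
proof -
  define c where "c = cl i j"
  define A where "A = {cl (i - 1) j, c}"
  define B where "B = {c, cl (i + 1) j}"
  define C where "C = {cl i (j - 1), c}"
  define D where "D = {c, cl i (j + 1)}"
  have vA: "vx T (i - 1) j = (if A \<in> T then 1 else 0)" unfolding vx_def A_def c_def by simp
  have vB: "vx T i j = (if B \<in> T then 1 else 0)" unfolding vx_def B_def c_def by simp
  have hC: "hx T i (j - 1) = (if C \<in> T then 1 else 0)" unfolding hx_def C_def c_def by simp
  have hD: "hx T i j = (if D \<in> T then 1 else 0)" unfolding hx_def D_def c_def by simp
  have dis: "A \<noteq> B" "A \<noteq> C" "A \<noteq> D" "B \<noteq> C" "B \<noteq> D" "C \<noteq> D"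
  proof -
    have n0: "cl (i - 1) j \<noteq> cl i j" by (rule cl_neq_r) simp_all
    have n1: "cl (i + 1) j \<noteq> cl i j" by (rule cl_neq_r) simp_all
    have n2: "cl (i - 1) j \<noteq> cl (i + 1) j" by (rule cl_neq_r) simp_all
    have n3: "cl (i - 1) j \<noteq> cl i (j - 1)" by (rule cl_neq_r) simp_all
    have n4: "cl (i - 1) j \<noteq> cl i (j + 1)" by (rule cl_neq_r) simp_all
    have n5: "cl (i + 1) j \<noteq> cl i (j - 1)" by (rule cl_neq_r) simp_all
    have n6: "cl (i + 1) j \<noteq> cl i (j + 1)" by (rule cl_neq_r) simp_all
    have m0: "cl i (j - 1) \<noteq> cl i j" by (rule cl_neq_c) simp_all
    have m1: "cl i (j + 1) \<noteq> cl i j" by (rule cl_neq_c) simp_all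
    have m2: "cl i (j - 1) \<noteq> cl i (j + 1)" by (rule cl_neq_c) simp_all
    note n = n0 n1 n2 n3 n4 n5 n6 m0 m1 m2
    show "A \<noteq> B" "A \<noteq> C" "A \<noteq> D" "B \<noteq> C" "B \<noteq> D" "C \<noteq> D"
      unfolding A_def B_def C_def D_def c_def using n by (auto simp: doubleton_eq_iff)
  qed
  have cin: "c \<in> A" "c \<in> B" "c \<in> C" "c \<in> D" unfolding A_def B_def C_def D_def by auto
  have disj: "\<And>X Y. X \<in> T \<Longrightarrow> Y \<in> T \<Longrightarrow> X \<noteq> Y \<Longrightarrow> X \<inter> Y = {}"
    using T tiling_disj by blast
  have some: "A \<in> T \<or> B \<in> T \<or> C \<in> T \<or> D \<in> T"
  proof -
    have "c \<in> \<Union>T" using tiling_union[OF T] cl_cells unfolding c_def by blast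
    then obtain X where X: "X \<in> T" "c \<in> X" by blast
    then have "is_domino N L X" using T tiling_dom by blast
    then show ?thesis
    proof (cases rule: domino_cases)
      case (1 p q)
      then have "c = cl p q \<or> c = cl (p + 1) q" using X by auto
      then show ?thesis
      proof
        assume h: "c = cl p q"
        then have "cl (p + 1) q = cl (i + 1) j" using cl_shift[of p q i j 1 0] c_def by simp
        then have "X = B" using 1 h B_def by simp
        then show ?thesis using X by simp
      next
        assume h: "c = cl (p + 1) q"
        then have "cl p q = cl (i - 1) j" using cl_shift[of "p+1" q i j "-1" 0] c_def by simp
        then have "X = A" using 1 h A_def by auto
        then show ?thesis using X by simp
      qed
    next
      case (2 p q)
      then have "c = cl p q \<or> c = cl p (q + 1)" using X by auto
      then show ?thesis
      proof
        assume h: "c = cl p q"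
        then have "cl p (q + 1) = cl i (j + 1)" using cl_shift[of p q i j 0 1] c_def by simp
        then have "X = D" using 2 h D_def by simp
        then show ?thesis using X by simp
      next
        assume h: "c = cl p (q + 1)"
        then have "cl p q = cl i (j - 1)" using cl_shift[of p "q+1" i j 0 "-1"] c_def by simp
        then have "X = C" using 2 h C_def by auto
        then show ?thesis using X by simp
      qed
    qed
  qed
  have ex: "X = Y" if "X \<in> {A,B,C,D}" "Y \<in> {A,B,C,D}" "X \<in> T" "Y \<in> T" for X Y
  proof (rule ccontr)
    assume "X \<noteq> Y"
    then have "X \<inter> Y = {}" using disj that by blast
    moreover have "c \<in> X" "c \<in> Y" using cin that by auto
    ultimately show False by blast
  qed
  from some show ?thesis
  proof (elim disjE)
    assume a: "A \<in> T"
    have "B \<notin> T" using ex[of A B] a dis by blast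
    moreover have "C \<notin> T" using ex[of A C] a dis by blast
    moreover have "D \<notin> T" using ex[of A D] a dis by blast
    ultimately show ?thesis unfolding vA vB hC hD using a by simp
  next
    assume a: "B \<in> T"
    have "A \<notin> T" using ex[of B A] a dis by blast
    moreover have "C \<notin> T" using ex[of B C] a dis by blast
    moreover have "D \<notin> T" using ex[of B D] a dis by blast
    ultimately show ?thesis unfolding vA vB hC hD using a by simp
  next
    assume a: "C \<in> T"
    have "A \<notin> T" using ex[of C A] a dis by blast
    moreover have "B \<notin> T" using ex[of C B] a dis by blast
    moreover have "D \<notin> T" using ex[of C D] a dis by blast
    ultimately show ?thesis unfolding vA vB hC hD using a by simp
  next
    assume a: "D \<in> T"
    have "A \<notin> T" using ex[of D A] a dis by blast
    moreover have "B \<notin> T" using ex[of D B] a dis by blast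
    moreover have "C \<notin> T" using ex[of D C] a dis by blast
    ultimately show ?thesis unfolding vA vB hC hD using a by simp
  qed
qed

lemma vx01: "vx T i j = 0 \<or> vx T i j = 1" unfolding vx_def by simp
lemma hx01: "hx T i j = 0 \<or> hx T i j = 1" unfolding hx_def by simp

lemma K2:
  assumes s: "is_tiling N L s" and t: "is_tiling N L t"
    and v: "\<And>i j. vx s i j = vx t i j" and h: "\<And>i j. hx s i j = hx t i j"
  shows "s = t"
proof -
  have sub: "X \<in> t'" if "X \<in> u" "is_tiling N L u"
    "\<And>i j. vx u i j = vx t' i j" "\<And>i j. hx u i j = hx t' i j" for X u t'
  proof -
    have "is_domino N L X" using that tiling_dom by blast
    then show ?thesis
    proof (cases rule: domino_cases)
      case (1 p q)
      then have "vx u p q = 1" using that(1) unfolding vx_def by simp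
      then have "vx t' p q = 1" using that(3) by simp
      then show ?thesis using 1 unfolding vx_def by (auto split: if_splits)
    next
      case (2 p q)
      then have "hx u p q = 1" using that(1) unfolding hx_def by simp
      then have "hx t' p q = 1" using that(4) by simp
      then show ?thesis using 2 unfolding hx_def by (auto split: if_splits)
    qed
  qed
  show ?thesis
  proof
    show "s \<subseteq> t"
    proof
      fix X assume "X \<in> s" then show "X \<in> t" by (rule sub[OF _ s v h])
    qed
    show "t \<subseteq> s"
    proof
      fix X assume "X \<in> t" then show "X \<in> s" by (rule sub[OF _ t]) (simp_all add: v h)
    qed
  qed
qed

end


lemma sg_i1: "sg (i + 1) j = - sg i j" unfolding sg_def by auto
lemma sg_j1: "sg i (j + 1) = - sg i j" unfolding sg_def by auto
lemma sg_im1: "sg (i - 1) j = - sg i j" unfolding sg_def by auto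
lemma sg_jm1: "sg i (j - 1) = - sg i j" unfolding sg_def by auto
lemma sg_cases: "sg i j = 1 \<or> sg i j = -1" unfolding sg_def by auto
lemma sg_sq: "sg i j * sg i j = 1" unfolding sg_def by auto

lemma tiling_replace:
  assumes T: "is_tiling a b T" and PT: "P \<subseteq> T" and U: "\<Union>P = \<Union>Q"
    and Qd: "\<And>X. X \<in> Q \<Longrightarrow> is_domino a b X"
    and Qdisj: "\<And>X Y. X \<in> Q \<Longrightarrow> Y \<in> Q \<Longrightarrow> X \<noteq> Y \<Longrightarrow> X \<inter> Y = {}"
    and Qne: "\<And>X. X \<in> Q \<Longrightarrow> X \<noteq> {}"
  shows "is_tiling a b (T - P \<union> Q)"
proof -
  have d1: "\<forall>D \<in> T - P \<union> Q. is_domino a b D" using T Qd tiling_dom by blast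
  have mix: "X \<inter> Y = {}" if "X \<in> T - P" "Y \<in> Q" for X Y
  proof -
    have "X \<inter> Z = {}" if "Z \<in> P" for Z
      using tiling_disj[OF T, of X Z] that \<open>X \<in> T - P\<close> PT by blast
    then have "X \<inter> \<Union>P = {}" by blast
    then show ?thesis using U \<open>Y \<in> Q\<close> by blast
  qed
  have d2: "\<forall>D \<in> T - P \<union> Q. \<forall>D' \<in> T - P \<union> Q. D \<noteq> D' \<longrightarrow> D \<inter> D' = {}"
  proof (intro ballI impI)
    fix D D' assume "D \<in> T - P \<union> Q" "D' \<in> T - P \<union> Q" "D \<noteq> D'"
    then consider "D \<in> T - P" "D' \<in> T - P" | "D \<in> T - P" "D' \<in> Q" | "D \<in> Q" "D' \<in> T - P"
      | "D \<in> Q" "D' \<in> Q" by blast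
    then show "D \<inter> D' = {}"
    proof cases
      case 1 then show ?thesis using tiling_disj[OF T] \<open>D \<noteq> D'\<close> by blast
    next
      case 2 then show ?thesis using mix by blast
    next
      case 3 then show ?thesis using mix by blast
    next
      case 4 then show ?thesis using Qdisj \<open>D \<noteq> D'\<close> by blast
    qed
  qed
  have "\<Union>(T - P \<union> Q) = \<Union>T"
  proof -
    have "\<Union>T = \<Union>(T - P) \<union> \<Union>P" using PT by blast
    then show ?thesis using U by blast
  qed
  then have d3: "\<Union>(T - P \<union> Q) = cells a b" using tiling_union[OF T] by simp
  show ?thesis unfolding is_tiling_def using d1 d2 d3 by blast
qed

context tor begin

definition Rel :: "cell set set \<Rightarrow> cell set set \<Rightarrow> (int \<Rightarrow> int \<Rightarrow> int) \<Rightarrow> bool" where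
  "Rel s t f \<longleftrightarrow>
    (\<forall>i j. f i (j + 1) - f i j = sg i j * (vx t (i - 1) j - vx s (i - 1) j)) \<and>
    (\<forall>i j. f (i + 1) j - f i j = sg i j * (hx s i (j - 1) - hx t i (j - 1))) \<and>
    (\<forall>i j. f i (j + int L) = f i j) \<and>
    (\<forall>i j. f (i + int N) j = - f i j)"

definition Good :: "cell set set \<Rightarrow> cell set set \<Rightarrow> bool" where
  "Good s t \<longleftrightarrow> (\<exists>f. Rel s t f)"

lemma Rel_refl: "Rel s s (\<lambda>_ _. 0)" unfolding Rel_def by simp

lemma Rel_sym: "Rel s t f \<Longrightarrow> Rel t s (\<lambda>i j. - f i j)"
  unfolding Rel_def by (auto simp: algebra_simps)

lemma Rel_trans: assumes A: "Rel s t f" and B: "Rel t u g" shows "Rel s u (\<lambda>i j. f i j + g i j)"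
  unfolding Rel_def
proof (intro conjI allI)
  fix i j
  have E1: "f i (j + 1) - f i j = sg i j * (vx t (i - 1) j - vx s (i - 1) j)"
    "f (i + 1) j - f i j = sg i j * (hx s i (j - 1) - hx t i (j - 1))"
    "f i (j + int L) = f i j" "f (i + int N) j = - f i j" using A unfolding Rel_def by blast+
  have E2: "g i (j + 1) - g i j = sg i j * (vx u (i - 1) j - vx t (i - 1) j)"
    "g (i + 1) j - g i j = sg i j * (hx t i (j - 1) - hx u i (j - 1))"
    "g i (j + int L) = g i j" "g (i + int N) j = - g i j" using B unfolding Rel_def by blast+
  show "f i (j + 1) + g i (j + 1) - (f i j + g i j) = sg i j * (vx u (i - 1) j - vx s (i - 1) j)"
    using E1(1) E2(1) by (simp add: algebra_simps)
  show "f (i + 1) j + g (i + 1) j - (f i j + g i j) = sg i j * (hx s i (j - 1) - hx u i (j - 1))"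
    using E1(2) E2(2) by (simp add: algebra_simps)
  show "f i (j + int L) + g i (j + int L) = f i j + g i j" using E1 E2 by simp
  show "f (i + int N) j + g (i + int N) j = - (f i j + g i j)" using E1 E2 by simp
qed

lemma Good_refl: "Good s s" using Rel_refl Good_def by blast
lemma Good_sym: "Good s t \<Longrightarrow> Good t s" using Rel_sym Good_def by blast
lemma Good_trans: "Good s t \<Longrightarrow> Good t u \<Longrightarrow> Good s u"
  unfolding Good_def using Rel_trans by metis

lemma sg_N: "sg (i + int N) j = - sg i j"
  using oddN unfolding sg_def by auto
lemma sg_L: "sg i (j + int L) = sg i j"
  using evL unfolding sg_def by auto

definition hp :: "int \<Rightarrow> int \<Rightarrow> cell set set" where
  "hp p q = {{cl p q, cl p (q + 1)}, {cl (p + 1) q, cl (p + 1) (q + 1)}}"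
definition vp :: "int \<Rightarrow> int \<Rightarrow> cell set set" where
  "vp p q = {{cl p q, cl (p + 1) q}, {cl p (q + 1), cl (p + 1) (q + 1)}}"

lemma hpair_cl: "hpair N L (cl p q) = hp p q"
  unfolding hpair_def hp_def by (simp add: down_cl right_cl)
lemma vpair_cl: "vpair N L (cl p q) = vp p q"
  unfolding vpair_def vp_def by (simp add: down_cl right_cl)

lemma flip_cl: "flip N L T T' \<longleftrightarrow> (\<exists>p q. (hp p q \<subseteq> T \<and> T' = T - hp p q \<union> vp p q) \<or>
    (vp p q \<subseteq> T \<and> T' = T - vp p q \<union> hp p q))"
proof
  assume "flip N L T T'"
  then obtain c where c: "c \<in> cells N L" "(hpair N L c \<subseteq> T \<and> T' = (T - hpair N L c) \<union> vpair N L c) \<or>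
      (vpair N L c \<subseteq> T \<and> T' = (T - vpair N L c) \<union> hpair N L c)" unfolding flip_def by blast
  from c(1) have "c = cl (int (fst c)) (int (snd c))" by (rule cells_cl)
  then show "\<exists>p q. (hp p q \<subseteq> T \<and> T' = T - hp p q \<union> vp p q) \<or>
    (vp p q \<subseteq> T \<and> T' = T - vp p q \<union> hp p q)" using c(2) hpair_cl vpair_cl by metis
next
  assume "\<exists>p q. (hp p q \<subseteq> T \<and> T' = T - hp p q \<union> vp p q) \<or>
    (vp p q \<subseteq> T \<and> T' = T - vp p q \<union> hp p q)"
  then obtain p q where "(hp p q \<subseteq> T \<and> T' = T - hp p q \<union> vp p q) \<or>
    (vp p q \<subseteq> T \<and> T' = T - vp p q \<union> hp p q)" by blast
  then show "flip N L T T'" unfolding flip_def using cl_cells hpair_cl vpair_cl by metis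
qed

lemma cells4:
  "cl p q \<noteq> cl p (q + 1)" "cl p q \<noteq> cl (p + 1) q" "cl p q \<noteq> cl (p + 1) (q + 1)"
  "cl p (q + 1) \<noteq> cl (p + 1) q" "cl p (q + 1) \<noteq> cl (p + 1) (q + 1)" "cl (p + 1) q \<noteq> cl (p + 1) (q + 1)"
  by ((rule cl_neq_c; force) | (rule cl_neq_r; force))+

lemma hp_vp_props:
  "\<Union>(hp p q) = \<Union>(vp p q)"
  "\<And>X. X \<in> hp p q \<Longrightarrow> is_domino N L X" "\<And>X. X \<in> vp p q \<Longrightarrow> is_domino N L X"
  "\<And>X Y. X \<in> hp p q \<Longrightarrow> Y \<in> hp p q \<Longrightarrow> X \<noteq> Y \<Longrightarrow> X \<inter> Y = {}"
  "\<And>X Y. X \<in> vp p q \<Longrightarrow> Y \<in> vp p q \<Longrightarrow> X \<noteq> Y \<Longrightarrow> X \<inter> Y = {}"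
  "\<And>X. X \<in> hp p q \<Longrightarrow> X \<noteq> {}" "\<And>X. X \<in> vp p q \<Longrightarrow> X \<noteq> {}"
  using cells4[of p q] is_domino_v[of p q] is_domino_v[of p "q+1"] is_domino_h[of p q] is_domino_h[of "p+1" q]
  unfolding hp_def vp_def by auto

lemma hp_vp_cross:
  "\<And>X. X \<in> vp p q \<Longrightarrow> X \<notin> hp p q \<and> (\<exists>Y \<in> hp p q. X \<inter> Y \<noteq> {})"
  "\<And>X. X \<in> hp p q \<Longrightarrow> X \<notin> vp p q \<and> (\<exists>Y \<in> vp p q. X \<inter> Y \<noteq> {})"
  using cells4[of p q] unfolding hp_def vp_def by (auto simp: doubleton_eq_iff)

lemma disj_other:
  assumes T: "is_tiling N L T" and PT: "P \<subseteq> T"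
    and cr: "\<And>X. X \<in> Q \<Longrightarrow> X \<notin> P \<and> (\<exists>Y \<in> P. X \<inter> Y \<noteq> {})"
  shows "Q \<inter> T = {}"
proof (rule ccontr)
  assume "Q \<inter> T \<noteq> {}"
  then obtain X where X: "X \<in> Q" "X \<in> T" by blast
  then obtain Y where Y: "Y \<in> P" "X \<inter> Y \<noteq> {}" "X \<notin> P" using cr by blast
  then have "X \<noteq> Y" by blast
  then show False using tiling_disj[OF T X(2)] Y PT by blast
qed

lemma flip_hv_tiling: "is_tiling N L T \<Longrightarrow> hp p q \<subseteq> T \<Longrightarrow> is_tiling N L (T - hp p q \<union> vp p q)"
  by (rule tiling_replace) (use hp_vp_props in auto)
lemma flip_vh_tiling: "is_tiling N L T \<Longrightarrow> vp p q \<subseteq> T \<Longrightarrow> is_tiling N L (T - vp p q \<union> hp p q)"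
  by (rule tiling_replace) (use hp_vp_props in auto)

lemma flip_tiling: "is_tiling N L T \<Longrightarrow> flip N L T T' \<Longrightarrow> is_tiling N L T'"
  unfolding flip_cl using flip_hv_tiling flip_vh_tiling by blast

lemma flip_hv_back: assumes T: "is_tiling N L T" and h: "hp p q \<subseteq> T"
  shows "vp p q \<subseteq> T - hp p q \<union> vp p q" "T = (T - hp p q \<union> vp p q) - vp p q \<union> hp p q"
proof -
  have "vp p q \<inter> T = {}" by (rule disj_other[OF T h]) (use hp_vp_cross in blast)
  then show "vp p q \<subseteq> T - hp p q \<union> vp p q" "T = (T - hp p q \<union> vp p q) - vp p q \<union> hp p q"
    using h hp_vp_cross(2)[of _ p q] by blast+
qed

lemma flip_vh_back: assumes T: "is_tiling N L T" and h: "vp p q \<subseteq> T"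
  shows "hp p q \<subseteq> T - vp p q \<union> hp p q" "T = (T - vp p q \<union> hp p q) - hp p q \<union> vp p q"
proof -
  have "hp p q \<inter> T = {}" by (rule disj_other[OF T h]) (use hp_vp_cross in blast)
  then show "hp p q \<subseteq> T - vp p q \<union> hp p q" "T = (T - vp p q \<union> hp p q) - hp p q \<union> vp p q"
    using h hp_vp_cross(1)[of _ p q] by blast+
qed

lemma flip_sym: "is_tiling N L T \<Longrightarrow> flip N L T T' \<Longrightarrow> flip N L T' T"
  unfolding flip_cl using flip_hv_back flip_vh_back by metis

end

context tor begin

lemma vh_neq: "{cl r j, cl (r + 1) j} \<noteq> {cl x y, cl x (y + 1)}"
proof
  assume "{cl r j, cl (r + 1) j} = {cl x y, cl x (y + 1)}"
  then have "(cl r j = cl x y \<and> cl (r + 1) j = cl x (y + 1)) \<or> (cl r j = cl x (y + 1) \<and> cl (r + 1) j = cl x y)"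
    by (auto simp: doubleton_eq_iff)
  then have "int N dvd (r - x) \<and> int N dvd (r + 1 - x)" by (auto simp: cl_eq)
  then have "int N dvd ((r + 1 - x) - (r - x))" using dvd_diff by blast
  then show False using smallN[of 1] by simp
qed

lemma vv_eq: "{cl r j, cl (r + 1) j} = {cl x y, cl (x + 1) y} \<longleftrightarrow> cl r j = cl x y"
proof
  assume "{cl r j, cl (r + 1) j} = {cl x y, cl (x + 1) y}"
  then have "(cl r j = cl x y \<and> cl (r + 1) j = cl (x + 1) y) \<or> (cl r j = cl (x + 1) y \<and> cl (r + 1) j = cl x y)"
    by (auto simp: doubleton_eq_iff)
  then show "cl r j = cl x y"
  proof
    assume "cl r j = cl (x + 1) y \<and> cl (r + 1) j = cl x y"
    then have "int N dvd (r - (x + 1)) \<and> int N dvd (r + 1 - x)" by (auto simp: cl_eq)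
    then have "int N dvd ((r + 1 - x) - (r - (x + 1)))" using dvd_diff by blast
    then show ?thesis using smallN[of 2] by simp
  qed simp
next
  assume "cl r j = cl x y"
  then have "cl (r + 1) j = cl (x + 1) y" using cl_shift[of r j x y 1 0] by simp
  then show "{cl r j, cl (r + 1) j} = {cl x y, cl (x + 1) y}" using \<open>cl r j = cl x y\<close> by simp
qed

lemma hh_eq: "{cl r j, cl r (j + 1)} = {cl x y, cl x (y + 1)} \<longleftrightarrow> cl r j = cl x y"
proof
  assume "{cl r j, cl r (j + 1)} = {cl x y, cl x (y + 1)}"
  then have "(cl r j = cl x y \<and> cl r (j + 1) = cl x (y + 1)) \<or> (cl r j = cl x (y + 1) \<and> cl r (j + 1) = cl x y)"
    by (auto simp: doubleton_eq_iff)
  then show "cl r j = cl x y"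
  proof
    assume "cl r j = cl x (y + 1) \<and> cl r (j + 1) = cl x y"
    then have "int L dvd (j - (y + 1)) \<and> int L dvd (j + 1 - y)" by (auto simp: cl_eq)
    then have "int L dvd ((j + 1 - y) - (j - (y + 1)))" using dvd_diff by blast
    then show ?thesis using smallL[of 2] by simp
  qed simp
next
  assume "cl r j = cl x y"
  then have "cl r (j + 1) = cl x (y + 1)" using cl_shift[of r j x y 0 1] by simp
  then show "{cl r j, cl r (j + 1)} = {cl x y, cl x (y + 1)}" using \<open>cl r j = cl x y\<close> by simp
qed

lemma vp_disj: "is_tiling N L T \<Longrightarrow> hp p q \<subseteq> T \<Longrightarrow> vp p q \<inter> T = {}"
  by (rule disj_other) (use hp_vp_cross in blast)+

lemma vx_flip:
  assumes T: "is_tiling N L T" and h: "hp p q \<subseteq> T"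
  shows "vx (T - hp p q \<union> vp p q) r j - vx T r j = (if cl r j = cl p q \<or> cl r j = cl p (q + 1) then 1 else 0)"
proof -
  define V where "V = {cl r j, cl (r + 1) j}"
  have n1: "V \<notin> hp p q" unfolding V_def hp_def using vh_neq[of r j p q] vh_neq[of r j "p+1" q] by auto
  have n2: "V \<in> vp p q \<longleftrightarrow> cl r j = cl p q \<or> cl r j = cl p (q + 1)"
    unfolding V_def vp_def using vv_eq[of r j p q] vv_eq[of r j p "q+1"] by auto
  have n3: "V \<in> vp p q \<Longrightarrow> V \<notin> T" using vp_disj[OF T h] by blast
  show ?thesis unfolding vx_def V_def[symmetric] using n1 n2 n3 by auto
qed

lemma hx_flip:
  assumes T: "is_tiling N L T" and h: "hp p q \<subseteq> T"
  shows "hx T r j - hx (T - hp p q \<union> vp p q) r j = (if cl r j = cl p q \<or> cl r j = cl (p + 1) q then 1 else 0)"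
proof -
  define H where "H = {cl r j, cl r (j + 1)}"
  have n1: "H \<notin> vp p q" unfolding H_def vp_def using vh_neq[of p q r j] vh_neq[of p "q+1" r j] by auto
  have n2: "H \<in> hp p q \<longleftrightarrow> cl r j = cl p q \<or> cl r j = cl (p + 1) q"
    unfolding H_def hp_def using hh_eq[of r j p q] hh_eq[of r j "p+1" q] by auto
  have n3: "H \<in> hp p q \<Longrightarrow> H \<in> T" using h by blast
  show ?thesis unfolding hx_def H_def[symmetric] using n1 n2 n3 by auto
qed

definition dh :: "int \<Rightarrow> int \<Rightarrow> int \<Rightarrow> int \<Rightarrow> int" where
  "dh p q i j = (if cl i j = cl (p + 1) (q + 1) then - sg i j else 0)"

lemma K5:
  assumes T: "is_tiling N L T" and h: "hp p q \<subseteq> T"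
  shows "Rel T (T - hp p q \<union> vp p q) (dh p q)"
  unfolding Rel_def
proof (intro conjI allI)
  fix i j
  let ?T' = "T - hp p q \<union> vp p q"
  have e1: "cl i (j + 1) = cl (p + 1) (q + 1) \<longleftrightarrow> cl (i - 1) j = cl p q"
    by (simp add: cl_eq algebra_simps)
  have e2: "cl i j = cl (p + 1) (q + 1) \<longleftrightarrow> cl (i - 1) j = cl p (q + 1)"
    by (simp add: cl_eq algebra_simps)
  have x1: "\<not> (cl (i - 1) j = cl p q \<and> cl (i - 1) j = cl p (q + 1))" using cells4(1)[of p q] by auto
  show "dh p q i (j + 1) - dh p q i j = sg i j * (vx ?T' (i - 1) j - vx T (i - 1) j)"
    unfolding vx_flip[OF T h] dh_def e1 e2 sg_j1 using x1 by auto
  have e3: "cl (i + 1) j = cl (p + 1) (q + 1) \<longleftrightarrow> cl i (j - 1) = cl p q"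
    by (simp add: cl_eq algebra_simps)
  have e4: "cl i j = cl (p + 1) (q + 1) \<longleftrightarrow> cl i (j - 1) = cl (p + 1) q"
    by (simp add: cl_eq algebra_simps)
  have x2: "\<not> (cl i (j - 1) = cl p q \<and> cl i (j - 1) = cl (p + 1) q)" using cells4(2)[of p q] by auto
  show "dh p q (i + 1) j - dh p q i j = sg i j * (hx T i (j - 1) - hx ?T' i (j - 1))"
    unfolding hx_flip[OF T h] dh_def e3 e4 sg_i1 using x2 by auto
  show "dh p q i (j + int L) = dh p q i j" unfolding dh_def cl_L sg_L ..
  show "dh p q (i + int N) j = - dh p q i j" unfolding dh_def cl_N sg_N by simp
qed

lemma flip_Good: assumes T: "is_tiling N L T" and f: "flip N L T T'" shows "Good T T'"
proof -
  from f obtain p q where "(hp p q \<subseteq> T \<and> T' = T - hp p q \<union> vp p q) \<or>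
    (vp p q \<subseteq> T \<and> T' = T - vp p q \<union> hp p q)" unfolding flip_cl by blast
  then show ?thesis
  proof
    assume a: "hp p q \<subseteq> T \<and> T' = T - hp p q \<union> vp p q"
    then show ?thesis using K5[OF T] Good_def by blast
  next
    assume a: "vp p q \<subseteq> T \<and> T' = T - vp p q \<union> hp p q"
    then have T': "is_tiling N L T'" using flip_vh_tiling[OF T] by blast
    have "hp p q \<subseteq> T'" "T = T' - hp p q \<union> vp p q" using flip_vh_back[OF T] a by blast+
    then have "Rel T' T (dh p q)" using K5[OF T'] by metis
    then show ?thesis using Rel_sym Good_def by blast
  qed
qed

definition Rf :: "cell set set \<Rightarrow> cell set set \<Rightarrow> bool" where
  "Rf x y \<longleftrightarrow> x \<in> tilings N L \<and> y \<in> tilings N L \<and> flip N L x y"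

lemma Rf_sym: "Rf x y \<Longrightarrow> Rf y x"
  unfolding Rf_def tilings_def using flip_sym by blast

lemma Rf_Good: "Rf\<^sup>*\<^sup>* x y \<Longrightarrow> Good x y"
proof (induction rule: rtranclp_induct)
  case base then show ?case by (rule Good_refl)
next
  case (step y z)
  then have "Good y z" unfolding Rf_def tilings_def using flip_Good by blast
  then show ?case using step.IH Good_trans by blast
qed

lemma Rfs_sym: "Rf\<^sup>*\<^sup>* x y \<Longrightarrow> Rf\<^sup>*\<^sup>* y x"
proof (induction rule: rtranclp_induct)
  case base then show ?case by simp
next
  case (step y z)
  then show ?case using Rf_sym by (meson converse_rtranclp_into_rtranclp)
qed

end


lemma sum_split_nat: "(\<Sum>k<m + n. g k) = (\<Sum>k<m. g k) + (\<Sum>k<n. g (m + k))" for m n :: nat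
  by (induction n) (simp_all add: add.assoc)

lemma sum_shift_per:
  fixes g :: "int \<Rightarrow> int"
  assumes "g (int n) = g 0"
  shows "(\<Sum>k<n. g (int k + 1)) = (\<Sum>k<n. g (int k))"
proof -
  have "(\<Sum>k<Suc n. g (int k)) = g 0 + (\<Sum>k<n. g (int (Suc k)))"
    using sum.lessThan_Suc_shift[of "\<lambda>k. g (int k)" n] by simp
  moreover have "(\<Sum>k<Suc n. g (int k)) = (\<Sum>k<n. g (int k)) + g (int n)" by simp
  ultimately show ?thesis using assms by (simp add: add.commute)
qed

lemma sum_alt: "(\<Sum>k<n. (if even k then 1 else -1 :: int)) = (if even n then 0 else 1)" for n :: nat
  by (induction n) auto

lemma const_int: fixes h :: "int \<Rightarrow> int" assumes a: "\<And>x. h (x + 1) = h x" shows "h x = h 0"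
proof (rule int_induct[where k=0 and P="\<lambda>x. h x = h 0"])
  show "h 0 = h 0" by simp
next
  fix i :: int assume "h i = h 0" then show "h (i + 1) = h 0" using a[of i] by simp
next
  fix i :: int assume "h i = h 0" then show "h (i - 1) = h 0" using a[of "i - 1"] by simp
qed

lemma per_mod: fixes g :: "int \<Rightarrow> int" assumes per: "\<And>x. g (x + p) = g x"
  shows "g (x mod p) = g x"
proof -
  have A: "g (y + p * k) = g y" for y k
  proof (rule int_induct[where k=0 and P="\<lambda>k. g (y + p * k) = g y"])
    show "g (y + p * 0) = g y" by simp
  next
    fix i :: int assume h: "g (y + p * i) = g y"
    have "g (y + p * (i + 1)) = g ((y + p * i) + p)" by (simp add: algebra_simps)
    then show "g (y + p * (i + 1)) = g y" using per h by simp
  next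
    fix i :: int assume h: "g (y + p * i) = g y"
    have "g (y + p * i) = g ((y + p * (i - 1)) + p)" by (simp add: algebra_simps)
    then show "g (y + p * (i - 1)) = g y" using per h by simp
  qed
  have "x = x mod p + p * (x div p)" by simp
  then show ?thesis using A[of "x mod p" "x div p"] by metis
qed

lemma mod_suc: fixes M x :: int assumes "M > 0"
  shows "(x + 1) mod M = (if x mod M + 1 < M then x mod M + 1 else 0)"
proof -
  have r: "0 \<le> x mod M" "x mod M < M" using assms by auto
  have "(x + 1) mod M = (x mod M + 1) mod M" by (simp add: mod_add_left_eq)
  moreover have "x mod M + 1 < M \<Longrightarrow> (x mod M + 1) mod M = x mod M + 1" using r by simp
  moreover have "\<not> x mod M + 1 < M \<Longrightarrow> (x mod M + 1) mod M = 0"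
  proof -
    assume "\<not> x mod M + 1 < M"
    then have "x mod M + 1 = M" using r by simp
    then show ?thesis by simp
  qed
  ultimately show ?thesis by simp
qed

lemma sg_split: "sg i j = sg i 0 * sg 0 j" unfolding sg_def by auto

context tor begin

definition hinc :: "cell set set \<Rightarrow> cell set set \<Rightarrow> int \<Rightarrow> int \<Rightarrow> int" where
  "hinc s t i j = sg i j * (vx t (i - 1) j - vx s (i - 1) j)"
definition vinc :: "cell set set \<Rightarrow> cell set set \<Rightarrow> int \<Rightarrow> int \<Rightarrow> int" where
  "vinc s t i j = sg i j * (hx s i (j - 1) - hx t i (j - 1))"

lemma vx_N': "vx T (i + int N - 1) j = vx T (i - 1) j"
  using vx_N[of T "i - 1" j] by (simp add: algebra_simps)
lemma hx_L': "hx T i (j + int L - 1) = hx T i (j - 1)"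
  using hx_L[of T i "j - 1"] by (simp add: algebra_simps)
lemma vx_L': "vx T i (j + int L) = vx T i j" by (rule vx_L)

lemma hinc_N: "hinc s t (i + int N) j = - hinc s t i j"
  unfolding hinc_def sg_N vx_N' by simp
lemma vinc_N: "vinc s t (i + int N) j = - vinc s t i j"
  unfolding vinc_def sg_N hx_N by simp
lemma hinc_L: "hinc s t i (j + int L) = hinc s t i j"
  unfolding hinc_def sg_L vx_L by simp
lemma vinc_L: "vinc s t i (j + int L) = vinc s t i j"
  unfolding vinc_def sg_L hx_L' by simp
lemma hinc_2N: "hinc s t (i + int (2 * N)) j = hinc s t i j"
  using hinc_N[of s t "i + int N" j] hinc_N[of s t i j] by (simp add: algebra_simps)
lemma vinc_2N: "vinc s t (i + int (2 * N)) j = vinc s t i j"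
  using vinc_N[of s t "i + int N" j] vinc_N[of s t i j] by (simp add: algebra_simps)

lemma hinc_mod: "hinc s t (i mod int (2 * N)) (j mod int L) = hinc s t i j"
proof -
  have "hinc s t (i mod int (2 * N)) (j mod int L) = hinc s t i (j mod int L)"
    using per_mod[of "\<lambda>x. hinc s t x (j mod int L)" "int (2 * N)" i] hinc_2N by simp
  also have "\<dots> = hinc s t i j"
    using per_mod[of "\<lambda>x. hinc s t i x" "int L" j] hinc_L by simp
  finally show ?thesis .
qed

lemma vinc_mod: "vinc s t (i mod int (2 * N)) (j mod int L) = vinc s t i j"
proof -
  have "vinc s t (i mod int (2 * N)) (j mod int L) = vinc s t i (j mod int L)"
    using per_mod[of "\<lambda>x. vinc s t x (j mod int L)" "int (2 * N)" i] vinc_2N by simp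
  also have "\<dots> = vinc s t i j"
    using per_mod[of "\<lambda>x. vinc s t i x" "int L" j] vinc_L by simp
  finally show ?thesis .
qed

lemma face:
  assumes s: "is_tiling N L s" and t: "is_tiling N L t"
  shows "hinc s t (i + 1) j - hinc s t i j = vinc s t i (j + 1) - vinc s t i j"
proof -
  have ks: "vx s (i - 1) j + vx s i j + hx s i (j - 1) + hx s i j = 1" by (rule K1[OF s])
  have kt: "vx t (i - 1) j + vx t i j + hx t i (j - 1) + hx t i j = 1" by (rule K1[OF t])
  have X: "vx t i j - vx s i j + vx t (i - 1) j - vx s (i - 1) j =
      hx s i j - hx t i j + hx s i (j - 1) - hx t i (j - 1)" using ks kt by linarith
  have "hinc s t (i + 1) j - hinc s t i j = - sg i j * (vx t i j - vx s i j + vx t (i - 1) j - vx s (i - 1) j)"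
    unfolding hinc_def sg_i1 by (simp add: algebra_simps)
  moreover have "vinc s t i (j + 1) - vinc s t i j = - sg i j * (hx s i j - hx t i j + hx s i (j - 1) - hx t i (j - 1))"
    unfolding vinc_def sg_j1 by (simp add: algebra_simps)
  ultimately show ?thesis using X by simp
qed

lemma vper: "(\<Sum>k<2 * N. vinc s t (int k) j) = 0"
proof -
  have "(\<Sum>k<2 * N. vinc s t (int k) j) = (\<Sum>k<N + N. vinc s t (int k) j)" by (simp add: mult_2)
  also have "\<dots> = (\<Sum>k<N. vinc s t (int k) j) + (\<Sum>k<N. vinc s t (int (N + k)) j)"
    by (rule sum_split_nat)
  also have "(\<Sum>k<N. vinc s t (int (N + k)) j) = (\<Sum>k<N. - vinc s t (int k) j)"
    by (rule sum.cong) (auto simp: vinc_N[symmetric] add.commute)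
  finally show ?thesis by (simp add: sum_negf)
qed

definition Bf :: "cell set set \<Rightarrow> int \<Rightarrow> int" where
  "Bf T r = (\<Sum>b<L. sg 0 (int b) * vx T r (int b))"

lemma Bf_step: assumes T: "is_tiling N L T" shows "Bf T (r - 1) + Bf T r = 0"
proof -
  have k: "vx T (r - 1) (int b) + vx T r (int b) + hx T r (int b - 1) + hx T r (int b) = 1" for b
    by (rule K1[OF T])
  have "(\<Sum>b<L. sg 0 (int b) * (vx T (r - 1) (int b) + vx T r (int b) + hx T r (int b - 1) + hx T r (int b)))
      = (\<Sum>b<L. sg 0 (int b))" using k by simp
  also have "\<dots> = 0"
  proof -
    have "(\<Sum>b<L. sg 0 (int b)) = (\<Sum>b<L. (if even b then 1 else -1 :: int))"
      by (rule sum.cong) (auto simp: sg_def)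
    then show ?thesis using sum_alt[of L] evL by simp
  qed
  finally have E: "(\<Sum>b<L. sg 0 (int b) * (vx T (r - 1) (int b) + vx T r (int b) + hx T r (int b - 1) + hx T r (int b))) = 0" .
  have sh: "(\<Sum>b<L. sg 0 (int b) * hx T r (int b - 1)) = - (\<Sum>b<L. sg 0 (int b) * hx T r (int b))"
  proof -
    let ?g = "\<lambda>x. sg 0 x * hx T r (x - 1)"
    have "?g (int L) = ?g 0" using hx_L[of T r "-1"] sg_L[of 0 0] by simp
    then have "(\<Sum>k<L. ?g (int k + 1)) = (\<Sum>k<L. ?g (int k))" by (rule sum_shift_per)
    moreover have "?g (int k + 1) = - (sg 0 (int k) * hx T r (int k))" for k
      using sg_j1[of 0 "int k"] by simp
    ultimately show ?thesis by (simp add: sum_negf)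
  qed
  have "(\<Sum>b<L. sg 0 (int b) * (vx T (r - 1) (int b) + vx T r (int b) + hx T r (int b - 1) + hx T r (int b)))
     = Bf T (r - 1) + Bf T r + (\<Sum>b<L. sg 0 (int b) * hx T r (int b - 1)) + (\<Sum>b<L. sg 0 (int b) * hx T r (int b))"
    unfolding Bf_def by (simp add: algebra_simps sum.distrib)
  then show ?thesis using E sh by simp
qed

lemma Bf_zero: assumes T: "is_tiling N L T" shows "Bf T r = 0"
proof -
  have st: "Bf T (x + 1) = - Bf T x" for x using Bf_step[OF T, of "x + 1"] by simp
  have p: "Bf T (r + int k) = (-1) ^ k * Bf T r" for k
  proof (induction k)
    case 0 then show ?case by simp
  next
    case (Suc k)
    have "Bf T (r + int (Suc k)) = Bf T ((r + int k) + 1)" by (simp add: algebra_simps)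
    then show ?case using st[of "r + int k"] Suc by simp
  qed
  have "Bf T (r + int N) = Bf T r" unfolding Bf_def vx_N ..
  moreover have "(-1::int) ^ N = -1" using oddN by simp
  ultimately show ?thesis using p[of N] by simp
qed

lemma hper: assumes s: "is_tiling N L s" and t: "is_tiling N L t"
  shows "(\<Sum>b<L. hinc s t i (int b)) = 0"
proof -
  have "(\<Sum>b<L. hinc s t i (int b)) = sg i 0 * (Bf t (i - 1) - Bf s (i - 1))"
    unfolding hinc_def Bf_def
    by (subst sg_split) (simp add: sum_distrib_left sum_subtractf algebra_simps)
  then show ?thesis using Bf_zero[OF s] Bf_zero[OF t] by simp
qed

end

context tor begin

definition FF :: "cell set set \<Rightarrow> cell set set \<Rightarrow> nat \<Rightarrow> nat \<Rightarrow> int" where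
  "FF s t a b = (\<Sum>k<b. hinc s t 0 (int k)) + (\<Sum>k<a. vinc s t (int k) (int b))"
definition ff :: "cell set set \<Rightarrow> cell set set \<Rightarrow> int \<Rightarrow> int \<Rightarrow> int" where
  "ff s t i j = FF s t (nat (i mod int (2 * N))) (nat (j mod int L))"

lemma telescope:
  assumes s: "is_tiling N L s" and t: "is_tiling N L t"
  shows "(\<Sum>k<a. vinc s t (int k) (y + 1) - vinc s t (int k) y) = hinc s t (int a) y - hinc s t 0 y"
proof (induction a)
  case 0 then show ?case by simp
next
  case (Suc a)
  have "hinc s t (int a + 1) y - hinc s t (int a) y = vinc s t (int a) (y + 1) - vinc s t (int a) y"
    by (rule face[OF s t])
  then show ?case using Suc by (simp add: add.commute)
qed

lemma N2pos: "int (2 * N) > 0" using N3 by simp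

lemma ff_V:
  assumes s: "is_tiling N L s" and t: "is_tiling N L t"
  shows "ff s t (i + 1) j - ff s t i j = vinc s t i j"
proof -
  define a where "a = nat (i mod int (2 * N))"
  define b where "b = nat (j mod int L)"
  have ia: "int a = i mod int (2 * N)" unfolding a_def using N2pos by simp
  have ib: "int b = j mod int L" unfolding b_def using Lpos by simp
  have alt: "a < 2 * N" using ia N2pos by (metis of_nat_less_iff pos_mod_bound)
  have vv: "vinc s t i j = vinc s t (int a) (int b)" using vinc_mod ia ib by simp
  have m: "(i + 1) mod int (2 * N) = (if int a + 1 < int (2 * N) then int a + 1 else 0)"
    using mod_suc[OF N2pos, of i] ia by simp
  show ?thesis
  proof (cases "a + 1 < 2 * N")
    case True
    then have "nat ((i + 1) mod int (2 * N)) = a + 1" using m by simp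
    then have "ff s t (i + 1) j = FF s t (a + 1) b" unfolding ff_def b_def by simp
    moreover have "ff s t i j = FF s t a b" unfolding ff_def a_def b_def ..
    ultimately show ?thesis unfolding FF_def vv by simp
  next
    case False
    then have "nat ((i + 1) mod int (2 * N)) = 0" using m by simp
    then have "ff s t (i + 1) j = FF s t 0 b" unfolding ff_def b_def by simp
    moreover have "ff s t i j = FF s t a b" unfolding ff_def a_def b_def ..
    moreover have "Suc a = 2 * N" using False alt by simp
    moreover have "(\<Sum>k<Suc a. vinc s t (int k) (int b)) = (\<Sum>k<a. vinc s t (int k) (int b)) + vinc s t (int a) (int b)"
      by simp
    ultimately show ?thesis unfolding FF_def vv using vper[of s t "int b"] by simp
  qed
qed

lemma ff_H:
  assumes s: "is_tiling N L s" and t: "is_tiling N L t"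
  shows "ff s t i (j + 1) - ff s t i j = hinc s t i j"
proof -
  define a where "a = nat (i mod int (2 * N))"
  define b where "b = nat (j mod int L)"
  have ia: "int a = i mod int (2 * N)" unfolding a_def using N2pos by simp
  have ib: "int b = j mod int L" unfolding b_def using Lpos by simp
  have blt: "b < L" using ib Lpos by (metis of_nat_less_iff pos_mod_bound)
  have hh: "hinc s t i j = hinc s t (int a) (int b)" using hinc_mod ia ib by simp
  have m: "(j + 1) mod int L = (if int b + 1 < int L then int b + 1 else 0)"
    using mod_suc[OF Lpos, of j] ib by simp
  have ffi: "ff s t i j = FF s t a b" unfolding ff_def a_def b_def ..
  have tel: "(\<Sum>k<a. vinc s t (int k) (int b + 1)) - (\<Sum>k<a. vinc s t (int k) (int b)) = hinc s t (int a) (int b) - hinc s t 0 (int b)"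
    using telescope[OF s t, where a=a and y="int b"] by (simp add: sum_subtractf)
  show ?thesis
  proof (cases "b + 1 < L")
    case True
    then have "nat ((j + 1) mod int L) = b + 1" using m by simp
    then have "ff s t i (j + 1) = FF s t a (b + 1)" unfolding ff_def a_def by simp
    then show ?thesis unfolding ffi FF_def hh using tel by (simp add: add.commute)
  next
    case False
    then have "nat ((j + 1) mod int L) = 0" using m by simp
    then have e0: "ff s t i (j + 1) = FF s t a 0" unfolding ff_def a_def by simp
    have bL: "Suc b = L" using False blt by simp
    have v0: "vinc s t (int k) 0 = vinc s t (int k) (int b + 1)" for k
      using vinc_L[of s t "int k" 0] bL by (metis of_nat_Suc add.commute add_0)
    have hs: "(\<Sum>k<Suc b. hinc s t 0 (int k)) = 0" using hper[OF s t, of 0] bL by simp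
    have "FF s t a 0 - FF s t a b = (\<Sum>k<a. vinc s t (int k) (int b + 1)) - (\<Sum>k<b. hinc s t 0 (int k)) - (\<Sum>k<a. vinc s t (int k) (int b))"
      unfolding FF_def using v0 by simp
    also have "\<dots> = hinc s t (int a) (int b)" using tel hs by simp
    finally show ?thesis unfolding e0 ffi hh .
  qed
qed

lemma ff_L: "ff s t i (j + int L) = ff s t i j"
  unfolding ff_def by simp

lemma ff_q:
  assumes s: "is_tiling N L s" and t: "is_tiling N L t"
  shows "ff s t (i + int N) j + ff s t i j = (\<Sum>k<N. vinc s t (int k) 0)"
proof -
  define q where "q x y = ff s t (x + int N) y + ff s t x y" for x y
  have q1: "q (x + 1) y = q x y" for x y
  proof -
    have A: "ff s t (x + int N + 1) y - ff s t (x + int N) y = - vinc s t x y"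
      using ff_V[OF s t, of "x + int N" y] vinc_N by simp
    have B: "ff s t (x + 1) y - ff s t x y = vinc s t x y" by (rule ff_V[OF s t])
    have e: "x + 1 + int N = x + int N + 1" by simp
    show ?thesis unfolding q_def e using A B by linarith
  qed
  have q2: "q x (y + 1) = q x y" for x y
  proof -
    have A: "ff s t (x + int N) (y + 1) - ff s t (x + int N) y = - hinc s t x y"
      using ff_H[OF s t, of "x + int N" y] hinc_N by simp
    have B: "ff s t x (y + 1) - ff s t x y = hinc s t x y" by (rule ff_H[OF s t])
    show ?thesis unfolding q_def using A B by linarith
  qed
  have "q i j = q 0 j" using const_int[of "\<lambda>x. q x j"] q1 by blast
  also have "\<dots> = q 0 0" using const_int[of "\<lambda>y. q 0 y"] q2 by blast
  also have "\<dots> = (\<Sum>k<N. vinc s t (int k) 0)"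
  proof -
    have "int N mod int (2 * N) = int N" using N3 by simp
    then have "ff s t (int N) 0 = FF s t N 0" unfolding ff_def by simp
    moreover have "ff s t 0 0 = 0" unfolding ff_def FF_def by simp
    ultimately show ?thesis unfolding q_def FF_def by simp
  qed
  finally show ?thesis unfolding q_def .
qed

lemma Good_even:
  assumes s: "is_tiling N L s" and t: "is_tiling N L t"
    and ev: "even (\<Sum>k<N. vinc s t (int k) 0)"
  shows "Good s t"
proof -
  define c where "c = (\<Sum>k<N. vinc s t (int k) 0)"
  have c2: "c = 2 * (c div 2)" using ev unfolding c_def by simp
  define g where "g i j = ff s t i j - c div 2" for i j
  have "Rel s t g" unfolding Rel_def
  proof (intro conjI allI)
    fix i j
    show "g i (j + 1) - g i j = sg i j * (vx t (i - 1) j - vx s (i - 1) j)"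
      unfolding g_def using ff_H[OF s t, of i j] unfolding hinc_def by simp
    show "g (i + 1) j - g i j = sg i j * (hx s i (j - 1) - hx t i (j - 1))"
      unfolding g_def using ff_V[OF s t, of i j] unfolding vinc_def by simp
    show "g i (j + int L) = g i j" unfolding g_def ff_L ..
    show "g (i + int N) j = - g i j"
      unfolding g_def using ff_q[OF s t, of i j] c2 unfolding c_def by linarith
  qed
  then show ?thesis unfolding Good_def by blast
qed

definition tb :: "bool \<Rightarrow> cell set set" where
  "tb p = {{cl i j, cl i (j + 1)} | i j. even j = p}"

lemma L_par: "int L dvd x \<Longrightarrow> even x" using evL by (meson dvd_trans even_of_nat)

lemma hx_tb: "hx (tb p) i j = (if even j = p then 1 else 0)"
proof -
  have "{cl i j, cl i (j + 1)} \<in> tb p \<longleftrightarrow> (\<exists>i' j'. cl i j = cl i' j' \<and> even j' = p)"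
    unfolding tb_def using hh_eq by auto
  also have "\<dots> \<longleftrightarrow> even j = p"
  proof
    assume "\<exists>i' j'. cl i j = cl i' j' \<and> even j' = p"
    then obtain i' j' where "cl i j = cl i' j'" "even j' = p" by blast
    then have "int L dvd (j - j')" by (simp add: cl_eq)
    then have "even (j - j')" by (rule L_par)
    then show "even j = p" using \<open>even j' = p\<close> by simp
  qed blast
  finally show ?thesis unfolding hx_def by simp
qed

lemma vx_tb: "vx (tb p) i j = 0"
  unfolding vx_def tb_def using vh_neq by auto

lemma tb_tiling: "is_tiling N L (tb p)"
  unfolding is_tiling_def
proof (intro conjI ballI impI)
  fix D assume "D \<in> tb p" then show "is_domino N L D" unfolding tb_def using is_domino_h by blast
next
  fix D D' assume D: "D \<in> tb p" and D': "D' \<in> tb p" and ne: "D \<noteq> D'"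
  from D obtain i j where ij: "D = {cl i j, cl i (j + 1)}" "even j = p" unfolding tb_def by blast
  from D' obtain i' j' where ij': "D' = {cl i' j', cl i' (j' + 1)}" "even j' = p" unfolding tb_def by blast
  have n1: "cl i j \<noteq> cl i' j'" using ne ij ij' hh_eq by blast
  have n2: "cl i (j + 1) \<noteq> cl i' (j' + 1)"
    using n1 cl_shift[of i "j + 1" i' "j' + 1" 0 "-1"] by auto
  have n3: "cl i j \<noteq> cl i' (j' + 1)"
  proof
    assume "cl i j = cl i' (j' + 1)"
    then have "int L dvd (j - (j' + 1))" by (simp add: cl_eq)
    then have "even (j - (j' + 1))" by (rule L_par)
    then show False using ij(2) ij'(2) by auto
  qed
  have n4: "cl i (j + 1) \<noteq> cl i' j'"
  proof
    assume "cl i (j + 1) = cl i' j'"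
    then have "int L dvd (j + 1 - j')" by (simp add: cl_eq)
    then have "even (j + 1 - j')" by (rule L_par)
    then show False using ij(2) ij'(2) by auto
  qed
  show "D \<inter> D' = {}" using n1 n2 n3 n4 ij(1) ij'(1) by auto
next
  show "\<Union>(tb p) = cells N L"
  proof
    show "\<Union>(tb p) \<subseteq> cells N L" unfolding tb_def using cl_cells by blast
  next
    show "cells N L \<subseteq> \<Union>(tb p)"
    proof
      fix x assume "x \<in> cells N L"
      then have x: "x = cl (int (fst x)) (int (snd x))" by (rule cells_cl)
      define a where "a = int (fst x)"
      define b where "b = int (snd x)"
      show "x \<in> \<Union>(tb p)"
      proof (cases "even b = p")
        case True
        then have "{cl a b, cl a (b + 1)} \<in> tb p" unfolding tb_def by blast
        then show ?thesis using x a_def b_def by blast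
      next
        case False
        then have "even (b - 1) = p" by auto
        then have "{cl a (b - 1), cl a (b - 1 + 1)} \<in> tb p" unfolding tb_def by blast
        then show ?thesis using x a_def b_def by auto
      qed
    qed
  qed
qed

lemma sum_sg0: "(\<Sum>k<N. sg (int k) 0) = 1"
proof -
  have "(\<Sum>k<N. sg (int k) 0) = (\<Sum>k<N. (if even k then 1 else -1 :: int))"
    by (rule sum.cong) (auto simp: sg_def)
  then show ?thesis using sum_alt[of N] oddN by simp
qed

lemma classify:
  assumes t: "is_tiling N L t"
  shows "Good (tb True) t \<or> Good (tb False) t"
proof -
  define X where "X = (\<Sum>k<N. sg (int k) 0 * hx t (int k) (-1))"
  have A: "(\<Sum>k<N. vinc (tb True) t (int k) 0) = - X"
    unfolding vinc_def X_def hx_tb by (simp add: sum_negf)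
  have B: "(\<Sum>k<N. vinc (tb False) t (int k) 0) = 1 - X"
  proof -
    have "(\<Sum>k<N. vinc (tb False) t (int k) 0) = (\<Sum>k<N. sg (int k) 0 - sg (int k) 0 * hx t (int k) (-1))"
      unfolding vinc_def hx_tb by (simp add: algebra_simps)
    also have "\<dots> = 1 - X" unfolding X_def sum_subtractf sum_sg0 ..
    finally show ?thesis .
  qed
  show ?thesis
  proof (cases "even X")
    case True
    then have "even (\<Sum>k<N. vinc (tb True) t (int k) 0)" using A by simp
    then show ?thesis using Good_even[OF tb_tiling t] by blast
  next
    case False
    then have "even (\<Sum>k<N. vinc (tb False) t (int k) 0)" using B by simp
    then show ?thesis using Good_even[OF tb_tiling t] by blast
  qed
qed

lemma not_Good_tb: "\<not> Good (tb True) (tb False)"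
proof
  assume "Good (tb True) (tb False)"
  then obtain f where f: "Rel (tb True) (tb False) f" unfolding Good_def by blast
  have st: "f (x + 1) 0 - f x 0 = - sg x 0" for x
    using f unfolding Rel_def hx_tb by simp
  have "f (int n) 0 = f 0 0 - (\<Sum>k<n. sg (int k) 0)" for n
  proof (induction n)
    case 0 then show ?case by simp
  next
    case (Suc n) then show ?case using st[of "int n"] by (simp add: add.commute)
  qed
  then have "f (int N) 0 = f 0 0 - 1" using sum_sg0 by simp
  moreover have "f (0 + int N) 0 = - f 0 0" using f unfolding Rel_def by blast
  ultimately have "2 * f 0 0 = 1" by simp
  then show False by presburger
qed

end

context tor begin

definition Dom :: "(int \<times> int) set" where
  "Dom = {0..<int N} \<times> {0..<int L}"

definition Dsum :: "(int \<Rightarrow> int \<Rightarrow> int) \<Rightarrow> int" where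
  "Dsum f = (\<Sum>x\<in>Dom. \<bar>f (fst x) (snd x)\<bar>)"

lemma Dom_fin: "finite Dom" unfolding Dom_def by simp

lemma Rel_parts:
  assumes "Rel s t f"
  shows "f i (j + 1) - f i j = sg i j * (vx t (i - 1) j - vx s (i - 1) j)"
    "f (i + 1) j - f i j = sg i j * (hx s i (j - 1) - hx t i (j - 1))"
    "f i (j + int L) = f i j" "f (i + int N) j = - f i j"
  using assms unfolding Rel_def by blast+

lemma per2: fixes g :: "int \<Rightarrow> int \<Rightarrow> int"
  assumes "\<And>i j. g (i + P) j = g i j" "\<And>i j. g i (j + Q) = g i j"
  shows "g (i mod P) (j mod Q) = g i j"
proof -
  have "g (i mod P) (j mod Q) = g i (j mod Q)" using per_mod[of "\<lambda>x. g x (j mod Q)" P i] assms by simp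
  also have "\<dots> = g i j" using per_mod[of "\<lambda>x. g i x" Q j] assms by simp
  finally show ?thesis .
qed

lemma Dsum_dec:
  assumes R: "Rel s t f" and f1: "f i0 j0 \<ge> 1"
    and e: "\<And>i j. e i j = (if cl i j = cl i0 j0 then c * sg i j else 0)"
    and c: "c * sg i0 j0 = -1"
  shows "Dsum (\<lambda>i j. f i j + e i j) = Dsum f - 1"
proof -
  define w where "w = (i0 mod int N, j0 mod int L)"
  have wD: "w \<in> Dom" unfolding w_def Dom_def using Npos Lpos by auto
  have cl_w: "x \<in> Dom \<Longrightarrow> cl (fst x) (snd x) = cl i0 j0 \<longleftrightarrow> x = w" for x
  proof -
    assume "x \<in> Dom"
    then have r: "0 \<le> fst x" "fst x < int N" "0 \<le> snd x" "snd x < int L" unfolding Dom_def by auto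
    have "cl (fst x) (snd x) = cl i0 j0 \<longleftrightarrow> fst x mod int N = i0 mod int N \<and> snd x mod int L = j0 mod int L"
      by (simp add: cl_eq mod_eq_dvd_iff)
    also have "\<dots> \<longleftrightarrow> x = w" using r unfolding w_def by (cases x) auto
    finally show ?thesis .
  qed
  define p where "p i j = sg i j * f i j" for i j
  have pp0: "p (i0 mod int N) (j0 mod int L) = p i0 j0"
    by (rule per2) (auto simp: p_def sg_N sg_L Rel_parts[OF R])
  have pp: "p (fst w) (snd w) = p i0 j0" unfolding w_def using pp0 by simp
  let ?k = "sg i0 j0"
  have k2: "?k * ?k = 1" by (rule sg_sq)
  let ?sw = "sg (fst w) (snd w)"
  have s2: "?sw * ?sw = 1" by (rule sg_sq)
  have fw: "f (fst w) (snd w) = ?sw * ?k * f i0 j0"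
  proof -
    have "?sw * p (fst w) (snd w) = ?sw * ?sw * f (fst w) (snd w)" unfolding p_def by (simp add: algebra_simps)
    then show ?thesis using pp s2 unfolding p_def by (simp add: algebra_simps)
  qed
  have ew: "e (fst w) (snd w) = c * ?sw" using e cl_w[OF wD] by simp
  have cc: "c = - ?k" using c k2 by (metis minus_equation_iff mult_minus_left mult.commute mult_1 sg_cases)
  have fw': "f (fst w) (snd w) + e (fst w) (snd w) = ?sw * ?k * (f i0 j0 - 1)"
    unfolding fw ew cc using k2 by (simp add: algebra_simps)
  have absk: "\<bar>?sw * ?k\<bar> = 1" using sg_cases[of "fst w" "snd w"] sg_cases[of i0 j0] by auto
  have a1: "\<bar>f (fst w) (snd w)\<bar> = f i0 j0" unfolding fw using absk f1 by (simp add: abs_mult)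
  have a2: "\<bar>f (fst w) (snd w) + e (fst w) (snd w)\<bar> = f i0 j0 - 1" unfolding fw' using absk f1 by (simp add: abs_mult)
  have same: "\<And>x. x \<in> Dom - {w} \<Longrightarrow> \<bar>f (fst x) (snd x) + e (fst x) (snd x)\<bar> = \<bar>f (fst x) (snd x)\<bar>"
    using e cl_w by auto
  have "Dsum (\<lambda>i j. f i j + e i j) = \<bar>f (fst w) (snd w) + e (fst w) (snd w)\<bar> + (\<Sum>x\<in>Dom - {w}. \<bar>f (fst x) (snd x) + e (fst x) (snd x)\<bar>)"
    unfolding Dsum_def using sum.remove[OF Dom_fin wD] by simp
  also have "(\<Sum>x\<in>Dom - {w}. \<bar>f (fst x) (snd x) + e (fst x) (snd x)\<bar>) = (\<Sum>x\<in>Dom - {w}. \<bar>f (fst x) (snd x)\<bar>)"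
    using same by (rule sum.cong[OF refl])
  also have "Dsum f = \<bar>f (fst w) (snd w)\<bar> + (\<Sum>x\<in>Dom - {w}. \<bar>f (fst x) (snd x)\<bar>)"
    unfolding Dsum_def using sum.remove[OF Dom_fin wD] by simp
  ultimately show ?thesis using a1 a2 by simp
qed

lemma Dsum_nonneg: "Dsum f \<ge> 0" unfolding Dsum_def by (rule sum_nonneg) simp

lemma f_zero_eq:
  assumes s: "is_tiling N L s" and t: "is_tiling N L t" and R: "Rel s t f" and z: "\<And>i j. f i j = 0"
  shows "t = s"
proof -
  have sgnz: "sg i j \<noteq> 0" for i j using sg_cases[of i j] by auto
  have v: "vx s i j = vx t i j" for i j
    using Rel_parts(1)[OF R, of "i + 1" j] z sgnz[of "i+1" j] by simp
  have h: "hx s i j = hx t i j" for i j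
    using Rel_parts(2)[OF R, of i "j + 1"] z sgnz[of i "j+1"] by simp
  show ?thesis using K2[OF s t v h] by simp
qed

lemma descent:
  assumes s: "is_tiling N L s"
    and hsH: "\<And>i j. hs i (j + 1) - hs i j = - sg i j * (1 - 4 * vx s (i - 1) j)"
    and hsV: "\<And>i j. hs (i + 1) j - hs i j = sg i j * (1 - 4 * hx s i (j - 1))"
    and hsB: "\<And>i j. lo \<le> hs i j \<and> hs i j \<le> lo + 3"
    and hsP1: "\<And>i j. hs (i + int (2 * N)) j = hs i j"
    and hsP2: "\<And>i j. hs i (j + int L) = hs i j"
  shows "is_tiling N L t \<Longrightarrow> Rel s t f \<Longrightarrow> Rf\<^sup>*\<^sup>* t s"
proof (induction "nat (Dsum f)" arbitrary: t f rule: less_induct)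
  case less
  note t = less.prems(1) and R = less.prems(2)
  show ?case
  proof (cases "\<forall>i j. f i j = 0")
    case True
    then have "t = s" using f_zero_eq[OF s t R] by blast
    then show ?thesis by simp
  next
    case False
    then obtain a b where ab: "f a b \<noteq> 0" by blast
    define G where "G i j = 8 * f i j + hs i j" for i j
    define S2 where "S2 = {0..<int (2 * N)} \<times> {0..<int L}"
    have S2f: "finite S2" "S2 \<noteq> {}" unfolding S2_def using N3 L4 by auto
    define M where "M = Max ((\<lambda>x. G (fst x) (snd x)) ` S2)"
    have "M \<in> (\<lambda>x. G (fst x) (snd x)) ` S2"
      unfolding M_def using S2f by (intro Max_in) auto
    then obtain v where v: "v \<in> S2" "G (fst v) (snd v) = M" by blast
    have f2N: "f (i + int (2 * N)) j = f i j" for i j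
      using Rel_parts(4)[OF R, of i j] Rel_parts(4)[OF R, of "i + int N" j] by (simp add: algebra_simps)
    have Gper: "G (i mod int (2 * N)) (j mod int L) = G i j" for i j
      by (rule per2) (simp_all only: G_def f2N hsP1 hsP2 Rel_parts(3)[OF R])
    define i0 where "i0 = fst v"
    define j0 where "j0 = snd v"
    have Gmax: "G i j \<le> G i0 j0" for i j
    proof -
      have "(i mod int (2 * N), j mod int L) \<in> S2" unfolding S2_def using N3 Lpos by auto
      then have "G (i mod int (2 * N)) (j mod int L) \<le> M"
        unfolding M_def using S2f(1) by (metis (no_types, lifting) Max_ge finite_imageI fst_conv image_eqI snd_conv)
      then show ?thesis using Gper v unfolding i0_def j0_def by simp
    qed
    have fpos: "f i0 j0 \<ge> 1"
    proof (rule ccontr)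
      assume "\<not> f i0 j0 \<ge> 1"
      then have le: "f i0 j0 \<le> 0" by simp
      have fle: "f i j \<le> 0" for i j
      proof -
        have "8 * f i j + hs i j \<le> 8 * f i0 j0 + hs i0 j0" using Gmax[of i j] unfolding G_def .
        moreover have "lo \<le> hs i j" "hs i0 j0 \<le> lo + 3" using hsB by auto
        ultimately show ?thesis using le by linarith
      qed
      then have "f a b = 0" using fle[of "a + int N" b] Rel_parts(4)[OF R, of a b] fle[of a b] by simp
      then show False using ab by simp
    qed
    let ?k = "sg i0 j0"
    have Ge: "G i0 (j0 + 1) \<le> G i0 j0" and Gw: "G i0 (j0 - 1) \<le> G i0 j0"
      and Gs: "G (i0 + 1) j0 \<le> G i0 j0" and Gn: "G (i0 - 1) j0 \<le> G i0 j0" using Gmax by auto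
    have Dlt: "nat (Dsum f') < nat (Dsum f)" if "Dsum f' = Dsum f - 1" for f'
      using that Dsum_nonneg[of f'] by simp
    show ?thesis
    proof (cases "?k = 1")
      case True
      have y1: "hx t i0 (j0 - 1) = 1"
      proof -
        have "f (i0 + 1) j0 - f i0 j0 = ?k * (hx s i0 (j0 - 1) - hx t i0 (j0 - 1))" by (rule Rel_parts(2)[OF R])
        moreover have "hs (i0 + 1) j0 - hs i0 j0 = ?k * (1 - 4 * hx s i0 (j0 - 1))" by (rule hsV)
        ultimately show ?thesis using Gs True hx01[of t i0 "j0 - 1"] hx01[of s i0 "j0 - 1"]
          unfolding G_def by auto
      qed
      have y2: "hx t (i0 - 1) (j0 - 1) = 1"
      proof -
        have "f (i0 - 1 + 1) j0 - f (i0 - 1) j0 = sg (i0 - 1) j0 * (hx s (i0 - 1) (j0 - 1) - hx t (i0 - 1) (j0 - 1))"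
          by (rule Rel_parts(2)[OF R])
        moreover have "hs (i0 - 1 + 1) j0 - hs (i0 - 1) j0 = sg (i0 - 1) j0 * (1 - 4 * hx s (i0 - 1) (j0 - 1))" by (rule hsV)
        ultimately show ?thesis using Gn True sg_im1[of i0 j0] hx01[of t "i0 - 1" "j0 - 1"] hx01[of s "i0 - 1" "j0 - 1"]
          unfolding G_def by auto
      qed
      define p where "p = i0 - 1"
      define q where "q = j0 - 1"
      have hpt: "hp p q \<subseteq> t" using y1 y2 unfolding hp_def hx_def p_def q_def by (auto split: if_splits)
      define t' where "t' = t - hp p q \<union> vp p q"
      have t': "is_tiling N L t'" unfolding t'_def using flip_hv_tiling[OF t hpt] .
      have R1: "Rel t t' (dh p q)" unfolding t'_def using K5[OF t hpt] .
      have R2: "Rel s t' (\<lambda>i j. f i j + dh p q i j)" using Rel_trans[OF R R1] .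
      have e: "dh p q i j = (if cl i j = cl i0 j0 then (-1) * sg i j else 0)" for i j
        unfolding dh_def p_def q_def by simp
      have "Dsum (\<lambda>i j. f i j + dh p q i j) = Dsum f - 1"
        by (rule Dsum_dec[OF R fpos e]) (use True in simp)
      then have "Rf\<^sup>*\<^sup>* t' s" using less.hyps[OF Dlt t' R2] by blast
      moreover have "Rf t t'" unfolding Rf_def tilings_def flip_cl t'_def using t t'[unfolded t'_def] hpt by blast
      ultimately show ?thesis by (meson converse_rtranclp_into_rtranclp)
    next
      case False
      then have km: "?k = -1" using sg_cases by metis
      have x1: "vx t (i0 - 1) j0 = 1"
      proof -
        have "f i0 (j0 + 1) - f i0 j0 = ?k * (vx t (i0 - 1) j0 - vx s (i0 - 1) j0)" by (rule Rel_parts(1)[OF R])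
        moreover have "hs i0 (j0 + 1) - hs i0 j0 = - ?k * (1 - 4 * vx s (i0 - 1) j0)" by (rule hsH)
        ultimately show ?thesis using Ge km vx01[of t "i0 - 1" j0] vx01[of s "i0 - 1" j0]
          unfolding G_def by auto
      qed
      have x2: "vx t (i0 - 1) (j0 - 1) = 1"
      proof -
        have "f i0 (j0 - 1 + 1) - f i0 (j0 - 1) = sg i0 (j0 - 1) * (vx t (i0 - 1) (j0 - 1) - vx s (i0 - 1) (j0 - 1))"
          by (rule Rel_parts(1)[OF R])
        moreover have "hs i0 (j0 - 1 + 1) - hs i0 (j0 - 1) = - sg i0 (j0 - 1) * (1 - 4 * vx s (i0 - 1) (j0 - 1))" by (rule hsH)
        ultimately show ?thesis using Gw km sg_jm1[of i0 j0] vx01[of t "i0 - 1" "j0 - 1"] vx01[of s "i0 - 1" "j0 - 1"]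
          unfolding G_def by auto
      qed
      define p where "p = i0 - 1"
      define q where "q = j0 - 1"
      have vpt: "vp p q \<subseteq> t" using x1 x2 unfolding vp_def vx_def p_def q_def by (auto split: if_splits)
      define t' where "t' = t - vp p q \<union> hp p q"
      have t': "is_tiling N L t'" unfolding t'_def using flip_vh_tiling[OF t vpt] .
      have b1: "hp p q \<subseteq> t'" "t = t' - hp p q \<union> vp p q" using flip_vh_back[OF t vpt] unfolding t'_def by blast+
      have R1: "Rel t' t (dh p q)" using K5[OF t' b1(1)] b1(2) by simp
      have R2: "Rel s t' (\<lambda>i j. f i j + - dh p q i j)" using Rel_trans[OF R Rel_sym[OF R1]] .
      have e: "- dh p q i j = (if cl i j = cl i0 j0 then 1 * sg i j else 0)" for i j
        unfolding dh_def p_def q_def by simp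
      have "Dsum (\<lambda>i j. f i j + - dh p q i j) = Dsum f - 1"
        by (rule Dsum_dec[OF R fpos e]) (use km in simp)
      then have "Rf\<^sup>*\<^sup>* t' s" using less.hyps[OF Dlt t' R2] by blast
      moreover have "Rf t t'" unfolding Rf_def tilings_def flip_cl t'_def using t t'[unfolded t'_def] vpt by blast
      ultimately show ?thesis by (meson converse_rtranclp_into_rtranclp)
    qed
  qed
qed

end

context tor begin

definition hs0 :: "int \<Rightarrow> int \<Rightarrow> int" where
  "hs0 i j = (if odd i then 1 else 0) + (if odd j then (if odd i then 1 else -1) else 0)"
definition hs1 :: "int \<Rightarrow> int \<Rightarrow> int" where
  "hs1 i j = (if odd i then -3 else 0) + (if odd j then (if odd i then 1 else -1) else 0)"

lemma conn0: "is_tiling N L t \<Longrightarrow> Rel (tb True) t f \<Longrightarrow> Rf\<^sup>*\<^sup>* t (tb True)"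
proof (rule descent[where hs=hs0 and lo="-1"])
  show "is_tiling N L (tb True)" by (rule tb_tiling)
  show "hs0 i (j + 1) - hs0 i j = - sg i j * (1 - 4 * vx (tb True) (i - 1) j)" for i j
    unfolding hs0_def sg_def vx_tb by auto
  show "hs0 (i + 1) j - hs0 i j = sg i j * (1 - 4 * hx (tb True) i (j - 1))" for i j
    unfolding hs0_def sg_def hx_tb by auto
  show "- 1 \<le> hs0 i j \<and> hs0 i j \<le> - 1 + 3" for i j unfolding hs0_def by auto
  show "hs0 (i + int (2 * N)) j = hs0 i j" for i j unfolding hs0_def by auto
  show "hs0 i (j + int L) = hs0 i j" for i j unfolding hs0_def using evL by auto
qed

lemma conn1: "is_tiling N L t \<Longrightarrow> Rel (tb False) t f \<Longrightarrow> Rf\<^sup>*\<^sup>* t (tb False)"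
proof (rule descent[where hs=hs1 and lo="-3"])
  show "is_tiling N L (tb False)" by (rule tb_tiling)
  show "hs1 i (j + 1) - hs1 i j = - sg i j * (1 - 4 * vx (tb False) (i - 1) j)" for i j
    unfolding hs1_def sg_def vx_tb by auto
  show "hs1 (i + 1) j - hs1 i j = sg i j * (1 - 4 * hx (tb False) i (j - 1))" for i j
    unfolding hs1_def sg_def hx_tb by auto
  show "- 3 \<le> hs1 i j \<and> hs1 i j \<le> - 3 + 3" for i j unfolding hs1_def by auto
  show "hs1 (i + int (2 * N)) j = hs1 i j" for i j unfolding hs1_def by auto
  show "hs1 i (j + int L) = hs1 i j" for i j unfolding hs1_def using evL by auto
qed

lemma conn: "is_tiling N L t \<Longrightarrow> Rf\<^sup>*\<^sup>* t (tb True) \<or> Rf\<^sup>*\<^sup>* t (tb False)"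
  using classify conn0 conn1 unfolding Good_def by blast

end


definition timg :: "(cell \<Rightarrow> cell) \<Rightarrow> cell set set \<Rightarrow> cell set set" where
  "timg g T = (\<lambda>D. g ` D) ` T"

context tor begin

context
  fixes g h :: "cell \<Rightarrow> cell" and d :: int
  assumes hg: "\<And>x. h (g x) = x" and gh: "\<And>x. g (h x) = x" and gcl: "\<And>i j. g (cl i j) = cl i (j + d)"
begin

lemma g_inj: "inj g" by (metis hg injI)
lemma timg_inj: "inj (timg g)"
proof (rule injI)
  fix A B assume "timg g A = timg g B"
  then have "timg h (timg g A) = timg h (timg g B)" by simp
  moreover have "timg h (timg g X) = X" for X
    unfolding timg_def image_image using hg by simp
  ultimately show "A = B" by simp
qed
lemma img_inj: "inj (\<lambda>D. g ` D)"
  using g_inj by (simp add: inj_on_def inj_image_eq_iff)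

lemma timg_hp: "timg g (hp p q) = hp p (q + d)"
  unfolding timg_def hp_def by (simp add: gcl ac_simps)
lemma timg_vp: "timg g (vp p q) = vp p (q + d)"
  unfolding timg_def vp_def by (simp add: gcl ac_simps)

lemma timg_diff_un: "timg g (A - B \<union> C) = timg g A - timg g B \<union> timg g C"
  unfolding timg_def using img_inj by (simp add: image_Un image_set_diff)

lemma timg_flip: "flip N L x y \<Longrightarrow> flip N L (timg g x) (timg g y)"
proof -
  assume "flip N L x y"
  then obtain p q where "(hp p q \<subseteq> x \<and> y = x - hp p q \<union> vp p q) \<or> (vp p q \<subseteq> x \<and> y = x - vp p q \<union> hp p q)"
    unfolding flip_cl by blast
  then show ?thesis
  proof
    assume a: "hp p q \<subseteq> x \<and> y = x - hp p q \<union> vp p q"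
    have "timg g (hp p q) \<subseteq> timg g x" unfolding timg_def using a by (intro image_mono) blast
    then have "hp p (q + d) \<subseteq> timg g x" by (simp only: timg_hp)
    moreover have "timg g y = timg g x - hp p (q + d) \<union> vp p (q + d)"
      using a timg_diff_un timg_hp timg_vp by simp
    ultimately show ?thesis unfolding flip_cl by blast
  next
    assume a: "vp p q \<subseteq> x \<and> y = x - vp p q \<union> hp p q"
    have "timg g (vp p q) \<subseteq> timg g x" unfolding timg_def using a by (intro image_mono) blast
    then have "vp p (q + d) \<subseteq> timg g x" by (simp only: timg_vp)
    moreover have "timg g y = timg g x - vp p (q + d) \<union> hp p (q + d)"
      using a timg_diff_un timg_hp timg_vp by simp
    ultimately show ?thesis unfolding flip_cl by blast
  qed
qed

lemma g_cells: "g ` cells N L = cells N L"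
proof
  show "g ` cells N L \<subseteq> cells N L"
  proof
    fix y assume "y \<in> g ` cells N L"
    then obtain x where x: "x \<in> cells N L" "y = g x" by blast
    then have "x = cl (int (fst x)) (int (snd x))" using cells_cl by blast
    then have "y = cl (int (fst x)) (int (snd x) + d)" using x(2) gcl by metis
    then show "y \<in> cells N L" using cl_cells by simp
  qed
next
  show "cells N L \<subseteq> g ` cells N L"
  proof
    fix x assume "x \<in> cells N L"
    then have x: "x = cl (int (fst x)) (int (snd x))" using cells_cl by blast
    have "g (cl (int (fst x)) (int (snd x) - d)) = x" using gcl x by simp
    moreover have "cl (int (fst x)) (int (snd x) - d) \<in> cells N L" by (rule cl_cells)
    ultimately show "x \<in> g ` cells N L" by (metis imageI)
  qed
qed

lemma timg_tiling: assumes T: "is_tiling N L T" shows "is_tiling N L (timg g T)"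
  unfolding is_tiling_def
proof (intro conjI ballI impI)
  fix D assume "D \<in> timg g T"
  then obtain E where E: "E \<in> T" "D = g ` E" unfolding timg_def by blast
  have "is_domino N L E" using tiling_dom[OF T E(1)] .
  then show "is_domino N L D"
  proof (cases rule: domino_cases)
    case (1 p q) then show ?thesis using E gcl is_domino_v by simp
  next
    case (2 p q)
    then have "D = {cl p (q + d), cl p (q + d + 1)}" using E gcl by (simp add: ac_simps)
    then show ?thesis using is_domino_h by simp
  qed
next
  fix D D' assume "D \<in> timg g T" "D' \<in> timg g T" "D \<noteq> D'"
  then obtain E E' where E: "E \<in> T" "D = g ` E" "E' \<in> T" "D' = g ` E'" unfolding timg_def by blast
  then have "E \<noteq> E'" using \<open>D \<noteq> D'\<close> by blast
  then have "E \<inter> E' = {}" using tiling_disj[OF T] E by blast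
  then show "D \<inter> D' = {}" using E g_inj by (simp add: image_Int[symmetric])
next
  have "\<Union>(timg g T) = g ` \<Union>T" unfolding timg_def by blast
  then show "\<Union>(timg g T) = cells N L" using tiling_union[OF T] g_cells by simp
qed

lemma timg_Rf: assumes "Rf x y" shows "Rf (timg g x) (timg g y)"
proof -
  have "is_tiling N L x" "is_tiling N L y" "flip N L x y" using assms unfolding Rf_def tilings_def by auto
  then have "is_tiling N L (timg g x)" "is_tiling N L (timg g y)" "flip N L (timg g x) (timg g y)"
    using timg_tiling timg_flip by auto
  then show ?thesis unfolding Rf_def tilings_def by simp
qed

lemma timg_Rfs: "Rf\<^sup>*\<^sup>* x y \<Longrightarrow> Rf\<^sup>*\<^sup>* (timg g x) (timg g y)"
proof (induction rule: rtranclp_induct)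
  case base then show ?case by simp
next
  case (step y z) then show ?case using timg_Rf by (meson rtranclp.rtrancl_into_rtrancl)
qed

lemma timg_tb: assumes dodd: "odd d" shows "timg g (tb p) = tb (\<not> p)"
proof
  show "timg g (tb p) \<subseteq> tb (\<not> p)"
  proof
    fix D assume "D \<in> timg g (tb p)"
    then obtain i j where "D = g ` {cl i j, cl i (j + 1)}" "even j = p" unfolding timg_def tb_def by blast
    then have "D = {cl i (j + d), cl i ((j + d) + 1)}" "even (j + d) = (\<not> p)" using gcl dodd by (auto simp: ac_simps)
    then show "D \<in> tb (\<not> p)" unfolding tb_def by blast
  qed
next
  show "tb (\<not> p) \<subseteq> timg g (tb p)"
  proof
    fix D assume "D \<in> tb (\<not> p)"
    then obtain i j where ij: "D = {cl i j, cl i (j + 1)}" "even j = (\<not> p)" unfolding tb_def by blast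
    have "even (j - d) = p" using ij(2) dodd by auto
    then have "{cl i (j - d), cl i (j - d + 1)} \<in> tb p" unfolding tb_def by blast
    moreover have "g ` {cl i (j - d), cl i (j - d + 1)} = D" using ij(1) gcl by (simp add: ac_simps)
    ultimately show "D \<in> timg g (tb p)" unfolding timg_def by blast
  qed
qed

end

definition rho :: "cell \<Rightarrow> cell" where
  "rho x = (if snd x < L then (fst x, (snd x + 1) mod L) else x)"
definition rhoi :: "cell \<Rightarrow> cell" where
  "rhoi x = (if snd x < L then (fst x, (snd x + (L - 1)) mod L) else x)"

lemma rhoi_rho: "rhoi (rho x) = x"
proof (cases "snd x < L")
  case True
  have "((snd x + 1) mod L + (L - 1)) mod L = (snd x + 1 + (L - 1)) mod L" by (rule mod_add_left_eq)
  also have "\<dots> = (snd x + L) mod L" using L4 by simp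
  also have "\<dots> = snd x" using True by simp
  finally show ?thesis using True L4 unfolding rho_def rhoi_def by (cases x) simp
next
  case False then show ?thesis unfolding rho_def rhoi_def by simp
qed

lemma rho_rhoi: "rho (rhoi x) = x"
proof (cases "snd x < L")
  case True
  have "((snd x + (L - 1)) mod L + 1) mod L = (snd x + (L - 1) + 1) mod L" by (rule mod_add_left_eq)
  also have "\<dots> = (snd x + L) mod L" using L4 by simp
  also have "\<dots> = snd x" using True by simp
  finally show ?thesis using True L4 unfolding rho_def rhoi_def by (cases x) simp
next
  case False then show ?thesis unfolding rho_def rhoi_def by simp
qed

lemma rho_cl: "rho (cl i j) = cl i (j + 1)"
proof -
  have "snd (cl i j) < L" using cl_cells[of i j] unfolding cells_def by auto
  then have "rho (cl i j) = right L (cl i j)" unfolding rho_def right_def by simp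
  then show ?thesis using right_cl by simp
qed

lemma rhoi_cl': "rhoi (cl i j) = cl i (j + - 1)"
proof -
  have "rho (cl i (j + - 1)) = cl i j" using rho_cl[of i "j + - 1"] by simp
  then have "rhoi (rho (cl i (j + - 1))) = rhoi (cl i j)" by simp
  then show ?thesis using rhoi_rho by simp
qed

definition C0 where "C0 = flip_connected N L `` {tb True}"
definition C1 where "C1 = flip_connected N L `` {tb False}"

lemma Rf_eq: "(\<lambda>x y. x \<in> tilings N L \<and> y \<in> tilings N L \<and> flip N L x y) = Rf"
  unfolding Rf_def by (simp add: fun_eq_iff)

lemma fc_mem: "(x, y) \<in> flip_connected N L \<longleftrightarrow> x \<in> tilings N L \<and> y \<in> tilings N L \<and> Rf\<^sup>*\<^sup>* x y"
  unfolding flip_connected_def Rf_eq by simp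

lemma tb_til: "tb p \<in> tilings N L" unfolding tilings_def using tb_tiling by simp

lemma class_eq:
  assumes x: "x \<in> tilings N L" and xz: "Rf\<^sup>*\<^sup>* x z" and z: "z \<in> tilings N L"
  shows "flip_connected N L `` {x} = flip_connected N L `` {z}"
proof -
  have zx: "Rf\<^sup>*\<^sup>* z x" using Rfs_sym xz by blast
  show ?thesis
  proof
    show "flip_connected N L `` {x} \<subseteq> flip_connected N L `` {z}"
    proof
      fix y assume "y \<in> flip_connected N L `` {x}"
      then have y: "y \<in> tilings N L" "Rf\<^sup>*\<^sup>* x y" by (simp_all add: fc_mem)
      have "Rf\<^sup>*\<^sup>* z y" using rtranclp_trans[OF zx y(2)] .
      then show "y \<in> flip_connected N L `` {z}" using y z by (simp add: fc_mem)
    qed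
    show "flip_connected N L `` {z} \<subseteq> flip_connected N L `` {x}"
    proof
      fix y assume "y \<in> flip_connected N L `` {z}"
      then have y: "y \<in> tilings N L" "Rf\<^sup>*\<^sup>* z y" by (simp_all add: fc_mem)
      have "Rf\<^sup>*\<^sup>* x y" using rtranclp_trans[OF xz y(2)] .
      then show "y \<in> flip_connected N L `` {x}" using y x by (simp add: fc_mem)
    qed
  qed
qed

lemma components: "flip_components N L = {C0, C1}"
proof -
  have "flip_components N L = (\<Union>x\<in>tilings N L. {flip_connected N L `` {x}})"
    unfolding flip_components_def quotient_def ..
  also have "\<dots> = {C0, C1}"
  proof
    show "(\<Union>x\<in>tilings N L. {flip_connected N L `` {x}}) \<subseteq> {C0, C1}"
    proof
      fix X assume "X \<in> (\<Union>x\<in>tilings N L. {flip_connected N L `` {x}})"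
      then obtain x where x: "x \<in> tilings N L" "X = flip_connected N L `` {x}" by blast
      then have "Rf\<^sup>*\<^sup>* x (tb True) \<or> Rf\<^sup>*\<^sup>* x (tb False)" using conn unfolding tilings_def by blast
      then show "X \<in> {C0, C1}"
      proof
        assume "Rf\<^sup>*\<^sup>* x (tb True)"
        then have "X = C0" using class_eq[OF x(1) _ tb_til] x(2) unfolding C0_def by simp
        then show ?thesis by simp
      next
        assume "Rf\<^sup>*\<^sup>* x (tb False)"
        then have "X = C1" using class_eq[OF x(1) _ tb_til] x(2) unfolding C1_def by simp
        then show ?thesis by simp
      qed
    qed
    show "{C0, C1} \<subseteq> (\<Union>x\<in>tilings N L. {flip_connected N L `` {x}})"
      unfolding C0_def C1_def using tb_til by blast
  qed
  finally show ?thesis .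
qed

lemma C_ne: "C0 \<noteq> C1"
proof
  assume "C0 = C1"
  have "tb False \<in> C1" unfolding C1_def using tb_til by (simp add: fc_mem)
  then have "tb False \<in> C0" using \<open>C0 = C1\<close> by simp
  then have "Rf\<^sup>*\<^sup>* (tb True) (tb False)" unfolding C0_def by (simp add: fc_mem)
  then show False using Rf_Good not_Good_tb by blast
qed

lemma iso: "flip_iso N L C0 C1"
proof -
  have A: "\<And>x. rhoi (rho x) = x" "\<And>x. rho (rhoi x) = x" "\<And>i j. rho (cl i j) = cl i (j + 1)"
    using rhoi_rho rho_rhoi rho_cl by auto
  have B: "\<And>x. rho (rhoi x) = x" "\<And>x. rhoi (rho x) = x" "\<And>i j. rhoi (cl i j) = cl i (j + - 1)"
    using rhoi_rho rho_rhoi rhoi_cl' by auto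
  have hh: "timg rhoi (timg rho X) = X" for X unfolding timg_def image_image using rhoi_rho by simp
  have hh': "timg rho (timg rhoi X) = X" for X unfolding timg_def image_image using rho_rhoi by simp
  have t1: "timg rho (tb True) = tb False" using timg_tb[OF A, of True] by simp
  have t2: "timg rhoi (tb False) = tb True" using timg_tb[OF B, of False] by simp
  have bij: "bij_betw (timg rho) C0 C1"
  proof (rule bij_betw_imageI)
    show "inj_on (timg rho) C0" by (rule inj_on_subset[OF timg_inj[OF A]]) simp
    show "timg rho ` C0 = C1"
    proof
      show "timg rho ` C0 \<subseteq> C1"
      proof
        fix y assume "y \<in> timg rho ` C0"
        then obtain x where x: "x \<in> C0" "y = timg rho x" by blast
        then have xt: "x \<in> tilings N L" "Rf\<^sup>*\<^sup>* (tb True) x" unfolding C0_def by (auto simp: fc_mem)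
        have "y \<in> tilings N L" using timg_tiling[OF A] \<open>x \<in> tilings N L\<close> x(2) unfolding tilings_def by simp
        moreover have "Rf\<^sup>*\<^sup>* (tb False) y" using timg_Rfs[OF A \<open>Rf\<^sup>*\<^sup>* (tb True) x\<close>] t1 x(2) by simp
        ultimately show "y \<in> C1" unfolding C1_def using tb_til by (simp add: fc_mem)
      qed
      show "C1 \<subseteq> timg rho ` C0"
      proof
        fix y assume "y \<in> C1"
        then have "y \<in> tilings N L" "Rf\<^sup>*\<^sup>* (tb False) y" unfolding C1_def by (auto simp: fc_mem)
        have "timg rhoi y \<in> tilings N L" using timg_tiling[OF B] \<open>y \<in> tilings N L\<close> unfolding tilings_def by simp
        moreover have "Rf\<^sup>*\<^sup>* (tb True) (timg rhoi y)" using timg_Rfs[OF B \<open>Rf\<^sup>*\<^sup>* (tb False) y\<close>] t2 by simp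
        ultimately have "timg rhoi y \<in> C0" unfolding C0_def using tb_til by (simp add: fc_mem)
        moreover have "y = timg rho (timg rhoi y)" using hh' by simp
        ultimately show "y \<in> timg rho ` C0" by (rule rev_image_eqI)
      qed
    qed
  qed
  have fl: "flip N L x y \<longleftrightarrow> flip N L (timg rho x) (timg rho y)" for x y
  proof
    assume "flip N L x y" then show "flip N L (timg rho x) (timg rho y)" by (rule timg_flip[OF A])
  next
    assume "flip N L (timg rho x) (timg rho y)"
    then have "flip N L (timg rhoi (timg rho x)) (timg rhoi (timg rho y))" by (rule timg_flip[OF B])
    then show "flip N L x y" using hh by simp
  qed
  show ?thesis unfolding flip_iso_def
    by (rule exI[of _ "timg rho"], intro conjI bij ballI fl)
qed

lemma main: "\<exists>C1 C2. C1 \<noteq> C2 \<and> flip_components N L = {C1, C2} \<and> flip_iso N L C1 C2"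
  by (rule exI[of _ C0], rule exI[of _ C1]) (intro conjI C_ne components iso)

end

theorem corollary4p6:
  fixes n m :: nat
  assumes "n \<ge> 1" and "m \<ge> 2"
  shows "\<exists>C1 C2. C1 \<noteq> C2 \<and> flip_components (2*n+1) (2*m) = {C1, C2} \<and>
           flip_iso (2*n+1) (2*m) C1 C2"
proof -
  interpret tor "2*n+1" "2*m" using assms by unfold_locales auto
  show ?thesis by (rule main)
qed


end
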